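(* For every fixed $r\in\mathbb{N}$, the theory $\mathcal{T}_r$ is pseudofinite, and the theory $\mathcal{T}_\infty$ is pseudofinite.
   Context: Work in the language of graphs $\{R\}$. Let $\mathrm{Gr}$ be the axioms of simple graphs ($R$ irreflexive and symmetric) and let $\tau_n$ ($n\geq 3$) be the sentence $\forall y_1,\dots,y_n\,\neg\big(\bigwedge_{i<j}y_i\neq y_j\wedge\bigwedge_{i=1}^{n-1}y_iRy_{i+1}\wedge y_nRy_1\big)$ (no cycle of length $n$). $\mathcal{T}_\infty$ is axiomatized by $\mathrm{Gr}$, all $\tau_n$ ($n\geq 3$), and for each $n<\omega$ the sentence $\sigma_n$: $\forall x\exists y_1,\dots,y_n(\bigwedge_{i<j}y_i\neq y_j\wedge\bigwedge_i xRy_i)$ (every vertex has infinite degree). $\mathcal{T}_r$ is axiomatized by $\mathrm{Gr}$, all $\tau_n$ ($n\geq 3$), and the sentence saying every vertex has exactly $r$ neighbours. (Both theories are complete.) A theory $T$ is pseudofinite if every sentence implied by $T$ has a finite model; equivalently, $T$ has a model elementarily equivalent to an ultraproduct of finite structures. *)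

theory Defs
  imports Main
begin

datatype fm =
    Tru
  | Eq nat nat
  | Rel nat nat
  | Neg fm
  | Conj fm fm
  | Ex nat fm

definition Disj :: "fm \<Rightarrow> fm \<Rightarrow> fm" where
  "Disj a b = Neg (Conj (Neg a) (Neg b))"

definition Imp :: "fm \<Rightarrow> fm \<Rightarrow> fm" where
  "Imp a b = Neg (Conj a (Neg b))"

definition All :: "nat \<Rightarrow> fm \<Rightarrow> fm" where
  "All x a = Neg (Ex x (Neg a))"

primrec freevars :: "fm \<Rightarrow> nat set" where
  "freevars Tru = {}"
| "freevars (Eq x y) = {x, y}"
| "freevars (Rel x y) = {x, y}"
| "freevars (Neg a) = freevars a"
| "freevars (Conj a b) = freevars a \<union> freevars b"
| "freevars (Ex x a) = freevars a - {x}"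

definition sentence :: "fm \<Rightarrow> bool" where
  "sentence a \<longleftrightarrow> freevars a = {}"

primrec sat :: "'a set \<Rightarrow> ('a \<Rightarrow> 'a \<Rightarrow> bool) \<Rightarrow> (nat \<Rightarrow> 'a) \<Rightarrow> fm \<Rightarrow> bool" where
  "sat D R e Tru = True"
| "sat D R e (Eq x y) = (e x = e y)"
| "sat D R e (Rel x y) = R (e x) (e y)"
| "sat D R e (Neg a) = (\<not> sat D R e a)"
| "sat D R e (Conj a b) = (sat D R e a \<and> sat D R e b)"
| "sat D R e (Ex x a) = (\<exists>d\<in>D. sat D R (e(x := d)) a)"

definition holds :: "'a set \<Rightarrow> ('a \<Rightarrow> 'a \<Rightarrow> bool) \<Rightarrow> fm \<Rightarrow> bool" where
  "holds D R a \<longleftrightarrow> (\<forall>e. (\<forall>n. e n \<in> D) \<longrightarrow> sat D R e a)"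

text \<open>Since the language is countable, by downward
  Loewenheim-Skolem it suffices to quantify over structures whose universe is a
  nonempty set of natural numbers (this covers all finite and countable structures
  up to isomorphism).\<close>

definition entails :: "fm set \<Rightarrow> fm \<Rightarrow> bool" where
  "entails T a \<longleftrightarrow>
     (\<forall>(D::nat set) R. D \<noteq> {} \<longrightarrow> (\<forall>b\<in>T. holds D R b) \<longrightarrow> holds D R a)"

definition pseudofinite :: "fm set \<Rightarrow> bool" where
  "pseudofinite T \<longleftrightarrow>
     (\<forall>a. sentence a \<longrightarrow> entails T a \<longrightarrow>
        (\<exists>(D::nat set) R. finite D \<and> D \<noteq> {} \<and> holds D R a))"

definition big_conj :: "fm list \<Rightarrow> fm" where
  "big_conj xs = foldr Conj xs Tru"

definition big_disj :: "fm list \<Rightarrow> fm" where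
  "big_disj xs = Neg (big_conj (map Neg xs))"

definition alls :: "nat list \<Rightarrow> fm \<Rightarrow> fm" where
  "alls xs a = foldr All xs a"

definition exs :: "nat list \<Rightarrow> fm \<Rightarrow> fm" where
  "exs xs a = foldr Ex xs a"

definition distinct_vars :: "nat list \<Rightarrow> fm" where
  "distinct_vars xs =
     big_conj [Neg (Eq (xs ! i) (xs ! j)). i \<leftarrow> [0..<length xs], j \<leftarrow> [0..<length xs], i < j]"

definition Gr :: "fm set" where
  "Gr = {All 0 (Neg (Rel 0 0)), All 0 (All 1 (Imp (Rel 0 1) (Rel 1 0)))}"

text \<open>tau n: no cycle of length n; variables y_1..y_n are 0..n-1.\<close>
definition tau :: "nat \<Rightarrow> fm" where
  "tau n = alls [0..<n]
     (Neg (Conj (distinct_vars [0..<n])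
        (Conj (big_conj [Rel i (Suc i). i \<leftarrow> [0..<n - 1]]) (Rel (n - 1) 0))))"

text \<open>sigma n: every vertex has at least n neighbours; x is variable 0, y_i are 1..n.\<close>
definition sigma :: "nat \<Rightarrow> fm" where
  "sigma n = All 0 (exs [1..<Suc n]
     (Conj (distinct_vars [1..<Suc n]) (big_conj [Rel 0 i. i \<leftarrow> [1..<Suc n]])))"

text \<open>deg_exactly r: every vertex has exactly r neighbours;
  x is variable 0, y_i are 1..r, z is r+1.\<close>
definition deg_exactly :: "nat \<Rightarrow> fm" where
  "deg_exactly r = All 0 (exs [1..<Suc r]
     (Conj (distinct_vars [1..<Suc r])
       (Conj (big_conj [Rel 0 i. i \<leftarrow> [1..<Suc r]])
         (All (Suc r) (Imp (Rel 0 (Suc r)) (big_disj [Eq (Suc r) i. i \<leftarrow> [1..<Suc r]]))))))"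

definition T_r :: "nat \<Rightarrow> fm set" where
  "T_r r = Gr \<union> {tau n | n. n \<ge> 3} \<union> {deg_exactly r}"

definition T_inf :: "fm set" where
  "T_inf = Gr \<union> {tau n | n. n \<ge> 3} \<union> range sigma"

end

theory Submission
  imports Defs "HOL-Library.Countable"
begin


fun rc :: "nat \<Rightarrow> nat list \<Rightarrow> nat list" where
  "rc i [] = [i]"
| "rc i (j # w) = (if i = j then w else i # j # w)"

fun red :: "nat list \<Rightarrow> nat list" where
  "red [] = []"
| "red (i # w) = rc i (red w)"

fun reduced :: "nat list \<Rightarrow> bool" where
  "reduced [] = True"
| "reduced [i] = True"
| "reduced (i # j # w) = (i \<noteq> j \<and> reduced (j # w))"

primrec wact :: "(nat \<Rightarrow> 'a \<Rightarrow> 'a) \<Rightarrow> nat list \<Rightarrow> 'a \<Rightarrow> 'a" where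
  "wact f [] x = x"
| "wact f (i # w) x = f i (wact f w x)"

lemma reduced_tl: "reduced (i # w) \<Longrightarrow> reduced w"
  by (cases w) auto

lemma reduced_Cons: "reduced (i # w) \<longleftrightarrow> reduced w \<and> (w = [] \<or> hd w \<noteq> i)"
  by (cases w) auto

lemma rc_reduced: "reduced w \<Longrightarrow> reduced (rc i w)"
  by (cases w) (auto simp: reduced_Cons dest: reduced_tl)

lemma red_reduced: "reduced (red w)"
  by (induction w) (auto simp: rc_reduced)

lemma rc_Cons_ne: "w = [] \<or> hd w \<noteq> i \<Longrightarrow> rc i w = i # w"
  by (cases w) auto

lemma reduced_red: "reduced w \<Longrightarrow> red w = w"
proof (induction w)
  case (Cons i w)
  then have "reduced w" "w = [] \<or> hd w \<noteq> i" by (auto simp: reduced_Cons)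
  then show ?case using Cons rc_Cons_ne by simp
qed simp

lemma length_rc: "length (rc i w) \<le> Suc (length w)"
  by (cases w) auto

lemma length_red: "length (red w) \<le> length w"
proof (induction w)
  case (Cons i w)
  then show ?case using length_rc[of i "red w"] by simp
qed simp

lemma set_rc: "set (rc i w) \<subseteq> insert i (set w)"
  by (cases w) auto

lemma set_red: "set (red w) \<subseteq> set w"
  by (induction w) (auto dest: subsetD[OF set_rc])

lemma rc_rc: "reduced w \<Longrightarrow> rc i (rc i w) = w"
proof (cases w)
  case (Cons j w')
  assume r: "reduced w"
  show ?thesis
  proof (cases "i = j")
    case True
    then have "w' = [] \<or> hd w' \<noteq> i" using r Cons by (simp add: reduced_Cons)
    then show ?thesis using True Cons rc_Cons_ne by simp
  qed (use Cons in simp)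
qed simp

lemma red_append: "red (u @ w) = foldr rc u (red w)"
  by (induction u) auto

lemma reduced_append_last: "reduced (xs @ ys) \<Longrightarrow> xs \<noteq> [] \<Longrightarrow> ys \<noteq> [] \<Longrightarrow> last xs \<noteq> hd ys"
proof (induction xs)
  case Nil then show ?case by simp
next
  case (Cons a xs)
  then show ?case
    by (cases xs; cases ys) (auto simp: reduced_Cons dest: reduced_tl)
qed

lemma reduced_appendD1: "reduced (xs @ ys) \<Longrightarrow> reduced xs"
  by (induction xs) (auto simp: reduced_Cons)

lemma reduced_appendD2: "reduced (xs @ ys) \<Longrightarrow> reduced ys"
  by (induction xs) (auto dest: reduced_tl)

lemma reduced_snoc: "reduced (xs @ [i]) \<longleftrightarrow> reduced xs \<and> (xs = [] \<or> last xs \<noteq> i)"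
  by (induction xs) (auto simp: reduced_Cons)

lemma reduced_rev: "reduced (rev w) \<longleftrightarrow> reduced w"
proof -
  have "reduced w \<Longrightarrow> reduced (rev w)" for w
    by (induction w) (auto simp: reduced_snoc reduced_Cons last_rev dest: reduced_tl)
  then show ?thesis by (metis rev_rev_ident)
qed

lemma key:
  assumes "reduced x" "reduced y"
  shows "\<exists>c x1 y1. x = x1 @ c \<and> y = rev c @ y1 \<and> red (x @ y) = x1 @ y1 \<and> reduced (x1 @ y1)"
  using assms(1)
proof (induction x)
  case Nil
  then show ?case using assms(2) reduced_red by (intro exI[of _ "[]"] exI[of _ "[]"] exI[of _ y]) auto
next
  case (Cons i x')
  from Cons.prems have rx': "reduced x'" by (rule reduced_tl)
  from Cons.IH[OF rx'] obtain c x1 y1 where h: "x' = x1 @ c" "y = rev c @ y1"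
    "red (x' @ y) = x1 @ y1" "reduced (x1 @ y1)" by blast
  have red_eq: "red ((i # x') @ y) = rc i (x1 @ y1)" using h(3) by simp
  show ?case
  proof (cases x1)
    case (Cons a x1')
    then have "a \<noteq> i" using Cons.prems h(1) by (auto simp: reduced_Cons)
    then have "rc i (x1 @ y1) = i # x1 @ y1" using Cons by simp
    moreover have "reduced (i # x1 @ y1)" using h(4) \<open>a \<noteq> i\<close> Cons by (simp add: reduced_Cons)
    ultimately show ?thesis using h red_eq
      by (intro exI[of _ c] exI[of _ "i # x1"] exI[of _ y1]) auto
  next
    case Nil
    note N = Nil
    show ?thesis
    proof (cases "y1 \<noteq> [] \<and> hd y1 = i")
      case True
      then obtain y1' where y1: "y1 = i # y1'" by (cases y1) auto
      have "reduced y1'" using h(4) N y1 by (auto dest: reduced_tl)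
      then show ?thesis using h red_eq N y1
        by (intro exI[of _ "i # c"] exI[of _ "[]"] exI[of _ y1']) auto
    next
      case False
      then have "rc i y1 = i # y1" by (cases y1) auto
      moreover have "reduced (i # y1)" using False h(4) N by (simp add: reduced_Cons)
      ultimately show ?thesis using h red_eq N
        by (intro exI[of _ c] exI[of _ "[i]"] exI[of _ y1]) auto
    qed
  qed
qed

lemma set_left_cancel:
  assumes "reduced u" "reduced w"
  shows "set u \<subseteq> set (red (u @ w)) \<union> set w"
proof -
  obtain c x1 y1 where h: "u = x1 @ c" "w = rev c @ y1" "red (u @ w) = x1 @ y1"
    using key[OF assms] by blast
  then show ?thesis by auto
qed

lemma red_nonempty_fix:
  assumes "reduced v" "reduced w" "v \<noteq> []"
  shows "red (v @ w) \<noteq> w"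
proof
  assume eq: "red (v @ w) = w"
  obtain c x1 y1 where h: "v = x1 @ c" "w = rev c @ y1" "red (v @ w) = x1 @ y1"
    using key[OF assms(1,2)] by blast
  have "x1 @ y1 = rev c @ y1" using h eq by simp
  then have x1: "x1 = rev c" by simp
  have "c \<noteq> []" using h(1) x1 assms(3) by auto
  then have "x1 \<noteq> []" using x1 by simp
  then have "last x1 \<noteq> hd c" using reduced_append_last assms(1) h(1) \<open>c \<noteq> []\<close> by blast
  then show False using x1 \<open>c \<noteq> []\<close> by (simp add: last_rev)
qed

lemma map_rc: "inj_on \<pi> (insert i (set w)) \<Longrightarrow> map \<pi> (rc i w) = rc (\<pi> i) (map \<pi> w)"
  by (cases w) (auto simp: inj_on_def)

lemma red_map: "inj_on \<pi> (set w) \<Longrightarrow> red (map \<pi> w) = map \<pi> (red w)"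
proof (induction w)
  case Nil then show ?case by simp
next
  case (Cons i w)
  have "inj_on \<pi> (insert i (set (red w)))"
    using Cons.prems set_red by (auto intro: inj_on_subset)
  then show ?case using Cons by (simp add: map_rc inj_on_insert)
qed

lemma reduced_map: "inj_on \<pi> (set w) \<Longrightarrow> reduced w \<Longrightarrow> reduced (map \<pi> w)"
  by (metis red_map red_reduced reduced_red)

lemma wact_append: "wact f (u @ w) x = wact f u (wact f w x)"
  by (induction u) auto

lemma wact_closed: "(\<And>i x. i \<in> S \<Longrightarrow> x \<in> A \<Longrightarrow> f i x \<in> A) \<Longrightarrow> set w \<subseteq> S \<Longrightarrow> x \<in> A \<Longrightarrow> wact f w x \<in> A"
  by (induction w) auto

definition invol :: "(nat \<Rightarrow> 'a \<Rightarrow> 'a) \<Rightarrow> nat set \<Rightarrow> 'a set \<Rightarrow> bool" where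
  "invol f S A \<longleftrightarrow> (\<forall>i\<in>S. \<forall>x\<in>A. f i x \<in> A \<and> f i (f i x) = x)"

lemma involD: "invol f S A \<Longrightarrow> i \<in> S \<Longrightarrow> x \<in> A \<Longrightarrow> f i x \<in> A"
  "invol f S A \<Longrightarrow> i \<in> S \<Longrightarrow> x \<in> A \<Longrightarrow> f i (f i x) = x"
  unfolding invol_def by auto

lemma wact_closed': "invol f S A \<Longrightarrow> set w \<subseteq> S \<Longrightarrow> x \<in> A \<Longrightarrow> wact f w x \<in> A"
  by (rule wact_closed[where S=S]) (auto dest: involD)

lemma wact_rc:
  assumes "invol f S A"
    "i \<in> S" "set w \<subseteq> S" "x \<in> A"
  shows "wact f (rc i w) x = f i (wact f w x)"
proof (cases w)
  case (Cons j w')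
  show ?thesis
  proof (cases "i = j")
    case True
    have "wact f w' x \<in> A" using wact_closed'[OF assms(1)] assms Cons by auto
    then show ?thesis using Cons True assms involD(2)[OF assms(1)] by auto
  qed (use Cons in auto)
qed simp

lemma wact_red:
  assumes "invol f S A"
    "set w \<subseteq> S" "x \<in> A"
  shows "wact f (red w) x = wact f w x"
  using assms(2)
proof (induction w)
  case (Cons i w)
  have "set (red w) \<subseteq> S" using Cons set_red by auto
  then show ?case using Cons wact_rc[OF assms(1), of i "red w" x] assms(3) by auto
qed simp

lemma wact_rev:
  assumes "invol f S A"
    "set w \<subseteq> S" "x \<in> A"
  shows "wact f (rev w) (wact f w x) = x"
  using assms(2,3)
proof (induction w arbitrary: x)
  case (Cons i w)
  have "wact f w x \<in> A" using wact_closed'[OF assms(1)] Cons by auto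
  then show ?case using Cons involD(2)[OF assms(1)] by (simp add: wact_append)
qed simp


definition Sim :: "'a set \<Rightarrow> (nat \<Rightarrow> 'a \<Rightarrow> 'a) \<Rightarrow> nat set \<Rightarrow> 'b set \<Rightarrow> (nat \<Rightarrow> 'b \<Rightarrow> 'b) \<Rightarrow> nat set
   \<Rightarrow> nat \<Rightarrow> nat \<Rightarrow> nat set \<Rightarrow> (nat \<Rightarrow> 'a) \<Rightarrow> (nat \<Rightarrow> 'b) \<Rightarrow> (nat \<Rightarrow> nat) \<Rightarrow> nat set \<Rightarrow> bool" where
"Sim A fA S B fB S' Cap n V e e' \<pi> P \<longleftrightarrow> finite P \<and> P \<subseteq> S \<and> inj_on \<pi> P \<and> \<pi> ` P \<subseteq> S' \<and>
   card P + n * 2^n \<le> Cap \<and> e ` V \<subseteq> A \<and> e' ` V \<subseteq> B \<and>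
   (\<forall>x\<in>V. \<forall>y\<in>V. \<forall>w. reduced w \<longrightarrow> set w \<subseteq> P \<longrightarrow> length w \<le> 2^n \<longrightarrow>
       (wact fA w (e x) = e y \<longleftrightarrow> wact fB (map \<pi> w) (e' x) = e' y)) \<and>
   (\<forall>x\<in>V. \<forall>y\<in>V. \<forall>w. reduced w \<longrightarrow> set w \<subseteq> S \<longrightarrow> length w \<le> 2^n \<longrightarrow>
       wact fA w (e x) = e y \<longrightarrow> set w \<subseteq> P) \<and>
   (\<forall>x\<in>V. \<forall>y\<in>V. \<forall>w. reduced w \<longrightarrow> set w \<subseteq> S' \<longrightarrow> length w \<le> 2^n \<longrightarrow>
       wact fB w (e' x) = e' y \<longrightarrow> set w \<subseteq> \<pi> ` P)"

lemma Sim_mono: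
  assumes "Sim A fA S B fB S' Cap n V e e' \<pi> P" "V' \<subseteq> V"
  shows "Sim A fA S B fB S' Cap n V' e e' \<pi> P"
  using assms unfolding Sim_def by (meson image_mono order_trans subsetD)

lemma Sim_swap:
  assumes "Sim A fA S B fB S' Cap n V e e' \<pi> P"
  shows "Sim B fB S' A fA S Cap n V e' e (inv_into P \<pi>) (\<pi> ` P)"
proof -
  note h = assms[unfolded Sim_def]
  have inj: "inj_on \<pi> P" using h by blast
  have im: "inv_into P \<pi> ` \<pi> ` P = P" using inj by simp
  have cardeq: "card (\<pi> ` P) = card P" using inj by (simp add: card_image)
  have one: "wact fB w (e' x) = e' y \<longleftrightarrow> wact fA (map (inv_into P \<pi>) w) (e x) = e y"
    if "x \<in> V" "y \<in> V" "reduced w" "set w \<subseteq> \<pi> ` P" "length w \<le> 2^n" for x y w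
  proof -
    let ?v = "map (inv_into P \<pi>) w"
    have sv: "set ?v \<subseteq> P" using that(4) im by auto
    have mv: "map \<pi> ?v = w"
    proof -
      have "\<forall>z\<in>set w. \<pi> (inv_into P \<pi> z) = z" using that(4) by (auto intro: f_inv_into_f)
      then show ?thesis by (induction w) auto
    qed
    have injw: "inj_on (inv_into P \<pi>) (set w)" using inj_on_inv_into[of "\<pi> ` P" \<pi> P] that(4)
      inj_on_subset by (metis inj_on_inv_into subset_refl)
    have rv: "reduced ?v" using reduced_map[OF injw that(3)] .
    have "length ?v \<le> 2^n" using that(5) by simp
    then show ?thesis using h that sv rv mv by metis
  qed
  have fin: "finite P" and PS: "P \<subseteq> S" and piS: "\<pi> ` P \<subseteq> S'" and cap: "card P + n * 2^n \<le> Cap"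
    and eA: "e ` V \<subseteq> A" and eB: "e' ` V \<subseteq> B"
    and two: "\<forall>x\<in>V. \<forall>y\<in>V. \<forall>w. reduced w \<longrightarrow> set w \<subseteq> S \<longrightarrow> length w \<le> 2^n \<longrightarrow>
       wact fA w (e x) = e y \<longrightarrow> set w \<subseteq> P"
    and three: "\<forall>x\<in>V. \<forall>y\<in>V. \<forall>w. reduced w \<longrightarrow> set w \<subseteq> S' \<longrightarrow> length w \<le> 2^n \<longrightarrow>
       wact fB w (e' x) = e' y \<longrightarrow> set w \<subseteq> \<pi> ` P"
    using h by blast+
  have inj2: "inj_on (inv_into P \<pi>) (\<pi> ` P)" by (rule inj_on_inv_into) simp
  show ?thesis unfolding Sim_def
  proof (intro conjI)
    show "card (\<pi> ` P) + n * 2 ^ n \<le> Cap" using cap cardeq by simp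
    show "\<forall>x\<in>V. \<forall>y\<in>V. \<forall>w. reduced w \<longrightarrow> set w \<subseteq> S \<longrightarrow> length w \<le> 2^n \<longrightarrow>
       wact fA w (e x) = e y \<longrightarrow> set w \<subseteq> inv_into P \<pi> ` \<pi> ` P" using two im by simp
    show "\<forall>x\<in>V. \<forall>y\<in>V. \<forall>w. reduced w \<longrightarrow> set w \<subseteq> \<pi> ` P \<longrightarrow> length w \<le> 2^n \<longrightarrow>
       (wact fB w (e' x) = e' y \<longleftrightarrow> wact fA (map (inv_into P \<pi>) w) (e x) = e y)"
      using one by blast
    show "finite (\<pi> ` P)" using fin by blast
    show "\<pi> ` P \<subseteq> S'" by (rule piS)
    show "inv_into P \<pi> ` \<pi> ` P \<subseteq> S" using im PS by simp
  qed (fact inj2 eA eB three)+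
qed

locale ef =
  fixes A :: "'a set" and fA :: "nat \<Rightarrow> 'a \<Rightarrow> 'a" and S :: "nat set"
    and B :: "'b set" and fB :: "nat \<Rightarrow> 'b \<Rightarrow> 'b" and S' :: "nat set"
    and L :: nat and N :: nat and Cap :: nat
  assumes invA: "\<And>i x. i \<in> S \<Longrightarrow> x \<in> A \<Longrightarrow> fA i x \<in> A \<and> fA i (fA i x) = x"
    and invB: "\<And>i x. i \<in> S' \<Longrightarrow> x \<in> B \<Longrightarrow> fB i x \<in> B \<and> fB i (fB i x) = x"
    and girthA: "\<And>x w. x \<in> A \<Longrightarrow> reduced w \<Longrightarrow> set w \<subseteq> S \<Longrightarrow> w \<noteq> [] \<Longrightarrow> length w \<le> L \<Longrightarrow> wact fA w x \<noteq> x"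
    and girthB: "\<And>x w. x \<in> B \<Longrightarrow> reduced w \<Longrightarrow> set w \<subseteq> S' \<Longrightarrow> w \<noteq> [] \<Longrightarrow> length w \<le> L \<Longrightarrow> wact fB w x \<noteq> x"
    and farA: "\<And>Y. Y \<subseteq> A \<Longrightarrow> finite Y \<Longrightarrow> card Y \<le> N \<Longrightarrow>
       \<exists>a\<in>A. \<forall>y\<in>Y. \<forall>w. set w \<subseteq> S \<longrightarrow> length w \<le> L \<longrightarrow> wact fA w y \<noteq> a"
    and farB: "\<And>Y. Y \<subseteq> B \<Longrightarrow> finite Y \<Longrightarrow> card Y \<le> N \<Longrightarrow>
       \<exists>a\<in>B. \<forall>y\<in>Y. \<forall>w. set w \<subseteq> S' \<longrightarrow> length w \<le> L \<longrightarrow> wact fB w y \<noteq> a"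
    and extAB: "\<And>P \<pi> X. finite P \<Longrightarrow> P \<subseteq> S \<Longrightarrow> inj_on \<pi> P \<Longrightarrow> \<pi> ` P \<subseteq> S' \<Longrightarrow> finite X \<Longrightarrow> X \<subseteq> S \<Longrightarrow>
       card P + card X \<le> Cap \<Longrightarrow> \<exists>\<pi>'. inj_on \<pi>' (P \<union> X) \<and> \<pi>' ` (P \<union> X) \<subseteq> S' \<and> (\<forall>i\<in>P. \<pi>' i = \<pi> i)"
    and extBA: "\<And>P \<pi> X. finite P \<Longrightarrow> P \<subseteq> S' \<Longrightarrow> inj_on \<pi> P \<Longrightarrow> \<pi> ` P \<subseteq> S \<Longrightarrow> finite X \<Longrightarrow> X \<subseteq> S' \<Longrightarrow>
       card P + card X \<le> Cap \<Longrightarrow> \<exists>\<pi>'. inj_on \<pi>' (P \<union> X) \<and> \<pi>' ` (P \<union> X) \<subseteq> S \<and> (\<forall>i\<in>P. \<pi>' i = \<pi> i)"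

lemma (in ef) swap: "ef B fB S' A fA S L N Cap"
  by unfold_locales (fact invB invA girthB girthA farB farA extBA extAB)+


lemma wact_inv_iff:
  assumes "invol f S A"
    "set u \<subseteq> S" "x \<in> A" "y \<in> A"
  shows "wact f u x = y \<longleftrightarrow> wact f (rev u) y = x"
proof
  assume "wact f u x = y" then show "wact f (rev u) y = x" using wact_rev[OF assms(1-3)] by simp
next
  assume h: "wact f (rev u) y = x"
  have "wact f (rev (rev u)) (wact f (rev u) y) = y" by (rule wact_rev[OF assms(1)]) (use assms in auto)
  then show "wact f u x = y" using h by simp
qed

context ef
begin

lemma invA': "invol fA S A" using invA unfolding invol_def by blast
lemma invB': "invol fB S' B" using invB unfolding invol_def by blast

lemma forth:
  assumes sim: "Sim A fA S B fB S' Cap n V e e' \<pi> P"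
    and n: "0 < n" and nL: "2^n \<le> L" and finV: "finite V" and cV: "card V \<le> N" and xV: "x \<notin> V"
    and a: "a \<in> A"
  shows "\<exists>b\<in>B. \<exists>\<pi>' P'. Sim A fA S B fB S' Cap (n - 1) (insert x V) (e(x := a)) (e'(x := b)) \<pi>' P'"
proof -
  note h = sim[unfolded Sim_def]
  have fin: "finite P" and PS: "P \<subseteq> S" and inj: "inj_on \<pi> P" and piS: "\<pi> ` P \<subseteq> S'"
    and cap: "card P + n * 2^n \<le> Cap"
    and eA: "e ` V \<subseteq> A" and eB: "e' ` V \<subseteq> B"
    and one: "\<forall>x\<in>V. \<forall>y\<in>V. \<forall>w. reduced w \<longrightarrow> set w \<subseteq> P \<longrightarrow> length w \<le> 2^n \<longrightarrow>
       (wact fA w (e x) = e y \<longleftrightarrow> wact fB (map \<pi> w) (e' x) = e' y)"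
    and two: "\<forall>x\<in>V. \<forall>y\<in>V. \<forall>w. reduced w \<longrightarrow> set w \<subseteq> S \<longrightarrow> length w \<le> 2^n \<longrightarrow>
       wact fA w (e x) = e y \<longrightarrow> set w \<subseteq> P"
    and three: "\<forall>x\<in>V. \<forall>y\<in>V. \<forall>w. reduced w \<longrightarrow> set w \<subseteq> S' \<longrightarrow> length w \<le> 2^n \<longrightarrow>
       wact fB w (e' x) = e' y \<longrightarrow> set w \<subseteq> \<pi> ` P"
    using h by blast+
  define D :: nat where "D = 2^(n-1)"
  have D2: "2 * D = 2^n" using n unfolding D_def by (cases n) auto
  have DL: "D \<le> L" using D2 nL by simp
  have capD: "card P + (n - 1) * 2^(n-1) + D \<le> Cap"
  proof -
    have "(n - 1) * 2^(n-1) + D = n * D" using n unfolding D_def by (cases n) auto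
    also have "\<dots> \<le> n * 2^n" using D2 by simp
    finally show ?thesis using cap by simp
  qed
  have e_upd: "\<And>y. y \<in> V \<Longrightarrow> (e(x := a)) y = e y" "\<And>y. y \<in> V \<Longrightarrow> (e'(x := b)) y = e' y" for b
    using xV by auto
  show ?thesis
  proof (cases "\<exists>j\<in>V. \<exists>w. reduced w \<and> set w \<subseteq> S \<and> length w \<le> D \<and> wact fA w (e j) = a")
    case True
    then obtain j w where j: "j \<in> V" and w: "reduced w" "set w \<subseteq> S" "length w \<le> D"
      and wa: "wact fA w (e j) = a" by blast
    have cw: "card (set w) \<le> D" using w(3) card_length le_trans by blast
    obtain \<pi>' where pi': "inj_on \<pi>' (P \<union> set w)" "\<pi>' ` (P \<union> set w) \<subseteq> S'" "\<forall>i\<in>P. \<pi>' i = \<pi> i"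
      using extAB[OF fin PS inj piS _ w(2)] cw capD by fastforce
    define P' where "P' = P \<union> set w"
    define b where "b = wact fB (map \<pi>' w) (e' j)"
    have ejA: "e j \<in> A" and ejB: "e' j \<in> B" using j eA eB by auto
    have P'S: "P' \<subseteq> S" using PS w(2) unfolding P'_def by auto
    have injP': "inj_on \<pi>' P'" using pi' unfolding P'_def by simp
    have piP'S: "\<pi>' ` P' \<subseteq> S'" using pi' unfolding P'_def by simp
    have mapP: "map \<pi>' v = map \<pi> v" if "set v \<subseteq> P" for v using pi'(3) that by (induction v) auto
    have imP: "\<pi>' ` P = \<pi> ` P" using pi'(3) by (auto simp: image_def)
    have bB: "b \<in> B" unfolding b_def
      by (rule wact_closed'[OF invB']) (use piP'S ejB in \<open>auto simp: P'_def\<close>)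
    have star: "wact fA v (e y) = e z \<longleftrightarrow> wact fB (map \<pi>' v) (e' y) = e' z"
      if "y \<in> V" "z \<in> V" "reduced v" "set v \<subseteq> P'" "length v \<le> 2^n" for y z v
    proof (cases "set v \<subseteq> P")
      case True
      then show ?thesis using one that mapP by metis
    next
      case False
      have vS: "set v \<subseteq> S" using that(4) P'S by auto
      have L: "wact fA v (e y) \<noteq> e z" using two that vS False by blast
      have R: "wact fB (map \<pi>' v) (e' y) \<noteq> e' z"
      proof
        assume eq: "wact fB (map \<pi>' v) (e' y) = e' z"
        have injv: "inj_on \<pi>' (set v)" using injP' that(4) inj_on_subset by blast
        have "reduced (map \<pi>' v)" using reduced_map[OF injv that(3)] .
        moreover have "set (map \<pi>' v) \<subseteq> S'" using that(4) piP'S by auto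
        moreover have "length (map \<pi>' v) \<le> 2^n" using that(5) by simp
        ultimately have "set (map \<pi>' v) \<subseteq> \<pi> ` P" using three[rule_format, OF that(1) that(2), of "map \<pi>' v"] eq by blast
        then have "\<pi>' ` set v \<subseteq> \<pi>' ` P" using imP by simp
        have "set v \<subseteq> P"
        proof
          fix c assume c: "c \<in> set v"
          then have "\<pi>' c \<in> \<pi>' ` P" using \<open>\<pi>' ` set v \<subseteq> \<pi>' ` P\<close> by blast
          moreover have "c \<in> P'" using c that(4) by blast
          moreover have "P \<subseteq> P'" unfolding P'_def by blast
          ultimately show "c \<in> P" using inj_on_image_mem_iff[OF injP'] by blast
        qed
        then show False using False by blast
      qed
      show ?thesis using L R by blast
    qed
    have C1: "wact fA u a = e z \<longleftrightarrow> wact fB (map \<pi>' u) b = e' z"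
      if "z \<in> V" "reduced u" "set u \<subseteq> P'" "length u \<le> D" for z u
    proof -
      let ?v = "red (u @ w)"
      have uS: "set u \<subseteq> S" using that(3) P'S by auto
      have "wact fA u a = wact fA (u @ w) (e j)" using wa by (simp add: wact_append)
      also have "\<dots> = wact fA ?v (e j)" using wact_red[where w="u @ w" and x="e j", OF invA'] uS w(2) ejA by auto
      finally have La: "wact fA u a = wact fA ?v (e j)" .
      have injuw: "inj_on \<pi>' (set (u @ w))" using injP' that(3) inj_on_subset unfolding P'_def by fastforce
      have "map \<pi>' ?v = red (map \<pi>' (u @ w))" using red_map[OF injuw] by simp
      then have "wact fB (map \<pi>' ?v) (e' j) = wact fB (map \<pi>' (u @ w)) (e' j)"
        using wact_red[where w="map \<pi>' (u @ w)" and x="e' j", OF invB'] ejB piP'S that(3)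
        by (auto simp: P'_def)
      also have "\<dots> = wact fB (map \<pi>' u) b" by (simp add: b_def wact_append)
      finally have Rb: "wact fB (map \<pi>' ?v) (e' j) = wact fB (map \<pi>' u) b" .
      have "set ?v \<subseteq> P'" using set_red[of "u @ w"] that(3) unfolding P'_def by auto
      moreover have "length ?v \<le> 2^n" using length_red[of "u @ w"] that(4) w(3) D2 by simp
      ultimately have "wact fA ?v (e j) = e z \<longleftrightarrow> wact fB (map \<pi>' ?v) (e' j) = e' z"
        using star[OF j that(1) red_reduced] by blast
      then show ?thesis using La Rb by simp
    qed
    have C2: "wact fA u (e z) = a \<longleftrightarrow> wact fB (map \<pi>' u) (e' z) = b"
      if "z \<in> V" "reduced u" "set u \<subseteq> P'" "length u \<le> D" for z u
    proof -
      have uS: "set u \<subseteq> S" using that(3) P'S by auto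
      have uS': "set (map \<pi>' u) \<subseteq> S'" using that(3) piP'S by auto
      have ezA: "e z \<in> A" and ezB: "e' z \<in> B" using that(1) eA eB by auto
      have "wact fA u (e z) = a \<longleftrightarrow> wact fA (rev u) a = e z"
        using wact_inv_iff[OF invA' uS ezA a] .
      also have "\<dots> \<longleftrightarrow> wact fB (map \<pi>' (rev u)) b = e' z"
        using C1[OF that(1)] that reduced_rev by simp
      also have "\<dots> \<longleftrightarrow> wact fB (map \<pi>' u) (e' z) = b"
        using wact_inv_iff[OF invB' uS' ezB bB] by (simp add: rev_map)
      finally show ?thesis .
    qed
    have C3: "wact fA u a = a \<longleftrightarrow> wact fB (map \<pi>' u) b = b"
      if "reduced u" "set u \<subseteq> P'" "length u \<le> D" for u
    proof (cases "u = []")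
      case False
      have injv: "inj_on \<pi>' (set u)" using injP' that(2) inj_on_subset by blast
      have "wact fA u a \<noteq> a" using girthA[OF a that(1)] that P'S False DL by auto
      moreover have "wact fB (map \<pi>' u) b \<noteq> b"
        using girthB[OF bB reduced_map[OF injv that(1)]] that piP'S False DL by auto
      ultimately show ?thesis by blast
    qed simp
    have T1: "set u \<subseteq> P'"
      if "z \<in> V" "reduced u" "set u \<subseteq> S" "length u \<le> D" "wact fA u a = e z" for z u
    proof -
      let ?v = "red (u @ w)"
      have "wact fA ?v (e j) = wact fA (u @ w) (e j)"
        using wact_red[where w="u @ w" and x="e j", OF invA'] that(3) w(2) ejA by auto
      also have "\<dots> = e z" using wa that(5) by (simp add: wact_append)
      finally have "wact fA ?v (e j) = e z" .
      moreover have "set ?v \<subseteq> S" using set_red[of "u @ w"] that(3) w(2) by auto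
      moreover have "length ?v \<le> 2^n" using length_red[of "u @ w"] that(4) w(3) D2 by simp
      ultimately have "set ?v \<subseteq> P" using two j that(1) red_reduced by blast
      then show ?thesis using set_left_cancel[OF that(2) w(1)] unfolding P'_def by blast
    qed
    have T2: "set u \<subseteq> \<pi>' ` P'"
      if "z \<in> V" "reduced u" "set u \<subseteq> S'" "length u \<le> D" "wact fB u b = e' z" for z u
    proof -
      let ?w = "map \<pi>' w"
      let ?v = "red (u @ ?w)"
      have injw: "inj_on \<pi>' (set w)" using injP' inj_on_subset unfolding P'_def by blast
      have rw: "reduced ?w" using reduced_map[OF injw w(1)] .
      have wS': "set ?w \<subseteq> S'" using piP'S unfolding P'_def by auto
      have "wact fB ?v (e' j) = wact fB (u @ ?w) (e' j)"
        using wact_red[where w="u @ ?w" and x="e' j", OF invB'] that(3) wS' ejB by auto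
      also have "\<dots> = e' z" using that(5) b_def by (simp add: wact_append)
      finally have "wact fB ?v (e' j) = e' z" .
      moreover have "set ?v \<subseteq> S'" using set_red[of "u @ ?w"] that(3) wS' by auto
      moreover have "length ?v \<le> 2^n" using length_red[of "u @ ?w"] that(4) w(3) D2 by simp
      ultimately have "set ?v \<subseteq> \<pi> ` P" using three j that(1) red_reduced by blast
      then have "set u \<subseteq> \<pi> ` P \<union> set ?w" using set_left_cancel[OF that(2) rw] by blast
      moreover have "\<pi>' ` P' = \<pi> ` P \<union> \<pi>' ` set w" unfolding P'_def image_Un imP ..
      ultimately show ?thesis by simp
    qed
    let ?E = "e(x := a)" and ?E' = "e'(x := b)"
    have capP': "card P' + (n - 1) * 2 ^ (n - 1) \<le> Cap"
    proof -
      have "card P' \<le> card P + card (set w)" unfolding P'_def by (rule card_Un_le)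
      then show ?thesis using capD cw by simp
    qed
    have DD: "2 ^ (n - 1) = D" by (simp add: D_def)
    have S1: "\<forall>p\<in>insert x V. \<forall>q\<in>insert x V. \<forall>u. reduced u \<longrightarrow> set u \<subseteq> P' \<longrightarrow> length u \<le> 2^(n-1) \<longrightarrow>
       (wact fA u (?E p) = ?E q \<longleftrightarrow> wact fB (map \<pi>' u) (?E' p) = ?E' q)"
    proof (intro ballI allI impI)
      fix p q u assume p: "p \<in> insert x V" and q: "q \<in> insert x V" and u: "reduced u" "set u \<subseteq> P'"
        "length u \<le> 2^(n-1)"
      have uD: "length u \<le> D" using u(3) DD by simp
      have u2: "length u \<le> 2^n" using uD D2 by simp
      show "wact fA u (?E p) = ?E q \<longleftrightarrow> wact fB (map \<pi>' u) (?E' p) = ?E' q"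
      proof (cases "p = x")
        case True
        show ?thesis
        proof (cases "q = x")
          case True
          then show ?thesis using \<open>p = x\<close> C3[OF u(1,2) uD] by simp
        next
          case False
          then have "q \<in> V" using q by simp
          then show ?thesis using \<open>p = x\<close> False C1[OF _ u(1,2) uD] xV by auto
        qed
      next
        case False
        then have pV: "p \<in> V" using p by simp
        show ?thesis
        proof (cases "q = x")
          case True
          then show ?thesis using False C2[OF pV u(1,2) uD] by simp
        next
          case False
          then have "q \<in> V" using q by simp
          then show ?thesis using \<open>p \<noteq> x\<close> False star[OF pV _ u(1,2) u2] by simp
        qed
      qed
    qed
    have S2: "\<forall>p\<in>insert x V. \<forall>q\<in>insert x V. \<forall>u. reduced u \<longrightarrow> set u \<subseteq> S \<longrightarrow> length u \<le> 2^(n-1) \<longrightarrow>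
       wact fA u (?E p) = ?E q \<longrightarrow> set u \<subseteq> P'"
    proof (intro ballI allI impI)
      fix p q u assume p: "p \<in> insert x V" and q: "q \<in> insert x V" and u: "reduced u" "set u \<subseteq> S"
        "length u \<le> 2^(n-1)" and eq: "wact fA u (?E p) = ?E q"
      have uD: "length u \<le> D" using u(3) DD by simp
      have u2: "length u \<le> 2^n" using uD D2 by simp
      show "set u \<subseteq> P'"
      proof (cases "p = x")
        case True
        show ?thesis
        proof (cases "q = x")
          case True
          then have "wact fA u a = a" using \<open>p = x\<close> eq by simp
          then have "u = []" using girthA[OF a u(1,2)] uD DL by fastforce
          then show ?thesis by simp
        next
          case False
          then have "q \<in> V" using q by simp
          then show ?thesis using \<open>p = x\<close> False T1[OF _ u(1,2) uD] eq xV by auto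
        qed
      next
        case False
        then have pV: "p \<in> V" using p by simp
        show ?thesis
        proof (cases "q = x")
          case True
          have epA: "e p \<in> A" using pV eA by auto
          have "wact fA u (e p) = a" using eq True False by simp
          then have "wact fA (rev u) a = e p" using wact_inv_iff[OF invA' u(2) epA a] by simp
          then have "set (rev u) \<subseteq> P'" by (intro T1[OF pV]) (use u uD reduced_rev in auto)
          then show ?thesis by simp
        next
          case False
          then have "q \<in> V" using q by simp
          then have "set u \<subseteq> P" using \<open>p \<noteq> x\<close> False two pV u u2 eq by auto
          then show ?thesis unfolding P'_def by auto
        qed
      qed
    qed
    have S3: "\<forall>p\<in>insert x V. \<forall>q\<in>insert x V. \<forall>u. reduced u \<longrightarrow> set u \<subseteq> S' \<longrightarrow> length u \<le> 2^(n-1) \<longrightarrow>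
       wact fB u (?E' p) = ?E' q \<longrightarrow> set u \<subseteq> \<pi>' ` P'"
    proof (intro ballI allI impI)
      fix p q u assume p: "p \<in> insert x V" and q: "q \<in> insert x V" and u: "reduced u" "set u \<subseteq> S'"
        "length u \<le> 2^(n-1)" and eq: "wact fB u (?E' p) = ?E' q"
      have uD: "length u \<le> D" using u(3) DD by simp
      have u2: "length u \<le> 2^n" using uD D2 by simp
      show "set u \<subseteq> \<pi>' ` P'"
      proof (cases "p = x")
        case True
        show ?thesis
        proof (cases "q = x")
          case True
          then have "wact fB u b = b" using \<open>p = x\<close> eq by simp
          then have "u = []" using girthB[OF bB u(1,2)] uD DL by fastforce
          then show ?thesis by simp
        next
          case False
          then have "q \<in> V" using q by simp
          then show ?thesis using \<open>p = x\<close> False T2[OF _ u(1,2) uD] eq xV by auto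
        qed
      next
        case False
        then have pV: "p \<in> V" using p by simp
        show ?thesis
        proof (cases "q = x")
          case True
          have epB: "e' p \<in> B" using pV eB by auto
          have "wact fB u (e' p) = b" using eq True False by simp
          then have "wact fB (rev u) b = e' p" using wact_inv_iff[OF invB' u(2) epB bB] by simp
          then have "set (rev u) \<subseteq> \<pi>' ` P'" by (intro T2[OF pV]) (use u uD reduced_rev in auto)
          then show ?thesis by simp
        next
          case False
          then have "q \<in> V" using q by simp
          then have "set u \<subseteq> \<pi> ` P" using \<open>p \<noteq> x\<close> False three pV u u2 eq by auto
          then show ?thesis using imP unfolding P'_def by auto
        qed
      qed
    qed
    have "Sim A fA S B fB S' Cap (n - 1) (insert x V) ?E ?E' \<pi>' P'"
      unfolding Sim_def
    proof (intro conjI)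
      show "finite P'" using fin unfolding P'_def by simp
      show "?E ` insert x V \<subseteq> A" using eA a xV by auto
      show "?E' ` insert x V \<subseteq> B" using eB bB xV by auto
    qed (fact P'S injP' piP'S capP' S1 S2 S3)+
    then show ?thesis using bB by blast
  next
    case False
    note far = False
    obtain b where bB: "b \<in> B" and bfar: "\<forall>y\<in>e' ` V. \<forall>w. set w \<subseteq> S' \<longrightarrow> length w \<le> L \<longrightarrow> wact fB w y \<noteq> b"
      using farB[OF eB finite_imageI[OF finV]] card_image_le[where f=e', OF finV] cV by fastforce
    let ?E = "e(x := a)" and ?E' = "e'(x := b)"
    have DD: "2 ^ (n - 1) = D" by (simp add: D_def)
    have notA: "wact fA u (e z) \<noteq> a" if "z \<in> V" "reduced u" "set u \<subseteq> S" "length u \<le> D" for z u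
      using far that by blast
    have notA': "wact fA u a \<noteq> e z" if "z \<in> V" "reduced u" "set u \<subseteq> S" "length u \<le> D" for z u
    proof
      assume "wact fA u a = e z"
      then have "wact fA (rev u) (e z) = a" using wact_inv_iff[where y="e z", OF invA' that(3) a] that(1) eA by auto
      then show False using notA[OF that(1) _ _ _] that reduced_rev by auto
    qed
    have notB: "wact fB u (e' z) \<noteq> b" if "z \<in> V" "set u \<subseteq> S'" "length u \<le> D" for z u
      using bfar that DL by auto
    have notB': "wact fB u b \<noteq> e' z" if "z \<in> V" "set u \<subseteq> S'" "length u \<le> D" for z u
    proof
      assume "wact fB u b = e' z"
      then have "wact fB (rev u) (e' z) = b" using wact_inv_iff[where y="e' z", OF invB' that(2) bB] that(1) eB by auto
      then show False using notB[OF that(1)] that by auto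
    qed
    have capP: "card P + (n - 1) * 2 ^ (n - 1) \<le> Cap" using capD by simp
    have S1: "\<forall>p\<in>insert x V. \<forall>q\<in>insert x V. \<forall>u. reduced u \<longrightarrow> set u \<subseteq> P \<longrightarrow> length u \<le> 2^(n-1) \<longrightarrow>
       (wact fA u (?E p) = ?E q \<longleftrightarrow> wact fB (map \<pi> u) (?E' p) = ?E' q)"
    proof (intro ballI allI impI)
      fix p q u assume p: "p \<in> insert x V" and q: "q \<in> insert x V" and u: "reduced u" "set u \<subseteq> P"
        "length u \<le> 2^(n-1)"
      have uD: "length u \<le> D" using u(3) DD by simp
      have u2: "length u \<le> 2^n" using uD D2 by simp
      have uS: "set u \<subseteq> S" using u(2) PS by auto
      have uS': "set (map \<pi> u) \<subseteq> S'" using u(2) piS by auto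
      have injv: "inj_on \<pi> (set u)" using inj u(2) inj_on_subset by blast
      have ru': "reduced (map \<pi> u)" using reduced_map[OF injv u(1)] .
      show "wact fA u (?E p) = ?E q \<longleftrightarrow> wact fB (map \<pi> u) (?E' p) = ?E' q"
      proof (cases "p = x")
        case True
        show ?thesis
        proof (cases "q = x")
          case True
          show ?thesis
          proof (cases "u = []")
            case False
            then show ?thesis using \<open>p = x\<close> True girthA[OF a u(1) uS] girthB[OF bB ru' uS'] uD DL by auto
          qed (use \<open>p = x\<close> True in simp)
        next
          case False
          then have "q \<in> V" using q by simp
          then show ?thesis using \<open>p = x\<close> False notA'[OF _ u(1) uS uD] notB'[OF _ uS'] uD xV by auto
        qed
      next
        case False
        then have pV: "p \<in> V" using p by simp
        show ?thesis
        proof (cases "q = x")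
          case True
          then show ?thesis using False pV notA[OF pV u(1) uS uD] notB[OF pV uS'] uD xV by auto
        next
          case False
          then have "q \<in> V" using q by simp
          then show ?thesis using \<open>p \<noteq> x\<close> False one pV u u2 xV by auto
        qed
      qed
    qed
    have S2: "\<forall>p\<in>insert x V. \<forall>q\<in>insert x V. \<forall>u. reduced u \<longrightarrow> set u \<subseteq> S \<longrightarrow> length u \<le> 2^(n-1) \<longrightarrow>
       wact fA u (?E p) = ?E q \<longrightarrow> set u \<subseteq> P"
    proof (intro ballI allI impI)
      fix p q u assume p: "p \<in> insert x V" and q: "q \<in> insert x V" and u: "reduced u" "set u \<subseteq> S"
        "length u \<le> 2^(n-1)" and eq: "wact fA u (?E p) = ?E q"
      have uD: "length u \<le> D" using u(3) DD by simp
      have u2: "length u \<le> 2^n" using uD D2 by simp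
      show "set u \<subseteq> P"
      proof (cases "p = x")
        case True
        show ?thesis
        proof (cases "q = x")
          case True
          then have "wact fA u a = a" using \<open>p = x\<close> eq by simp
          then have "u = []" using girthA[OF a u(1,2)] uD DL by fastforce
          then show ?thesis by simp
        next
          case False
          then have "q \<in> V" using q by simp
          then show ?thesis using \<open>p = x\<close> False notA'[OF _ u(1,2) uD] eq xV by auto
        qed
      next
        case False
        then have pV: "p \<in> V" using p by simp
        show ?thesis
        proof (cases "q = x")
          case True
          then show ?thesis using False notA[OF pV u(1,2) uD] eq by auto
        next
          case False
          then have "q \<in> V" using q by simp
          then show ?thesis using \<open>p \<noteq> x\<close> False two pV u u2 eq by auto
        qed
      qed
    qed
    have S3: "\<forall>p\<in>insert x V. \<forall>q\<in>insert x V. \<forall>u. reduced u \<longrightarrow> set u \<subseteq> S' \<longrightarrow> length u \<le> 2^(n-1) \<longrightarrow>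
       wact fB u (?E' p) = ?E' q \<longrightarrow> set u \<subseteq> \<pi> ` P"
    proof (intro ballI allI impI)
      fix p q u assume p: "p \<in> insert x V" and q: "q \<in> insert x V" and u: "reduced u" "set u \<subseteq> S'"
        "length u \<le> 2^(n-1)" and eq: "wact fB u (?E' p) = ?E' q"
      have uD: "length u \<le> D" using u(3) DD by simp
      have u2: "length u \<le> 2^n" using uD D2 by simp
      show "set u \<subseteq> \<pi> ` P"
      proof (cases "p = x")
        case True
        show ?thesis
        proof (cases "q = x")
          case True
          then have "wact fB u b = b" using \<open>p = x\<close> eq by simp
          then have "u = []" using girthB[OF bB u(1,2)] uD DL by fastforce
          then show ?thesis by simp
        next
          case False
          then have "q \<in> V" using q by simp
          then show ?thesis using \<open>p = x\<close> False notB'[OF _ u(2) uD] eq xV by auto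
        qed
      next
        case False
        then have pV: "p \<in> V" using p by simp
        show ?thesis
        proof (cases "q = x")
          case True
          then show ?thesis using False notB[OF pV u(2) uD] eq by auto
        next
          case False
          then have "q \<in> V" using q by simp
          then show ?thesis using \<open>p \<noteq> x\<close> False three pV u u2 eq by auto
        qed
      qed
    qed
    have "Sim A fA S B fB S' Cap (n - 1) (insert x V) ?E ?E' \<pi> P"
      unfolding Sim_def
    proof (intro conjI)
      show "?E ` insert x V \<subseteq> A" using eA a xV by auto
      show "?E' ` insert x V \<subseteq> B" using eB bB xV by auto
    qed (fact fin PS inj piS capP S1 S2 S3)+
    then show ?thesis using bB by blast
  qed
qed

end


primrec qd :: "fm \<Rightarrow> nat" where
  "qd Tru = 0" | "qd (Eq x y) = 0" | "qd (Rel x y) = 0" | "qd (Neg a) = qd a"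
| "qd (Conj a b) = max (qd a) (qd b)" | "qd (Ex x a) = Suc (qd a)"

primrec allvars :: "fm \<Rightarrow> nat set" where
  "allvars Tru = {}" | "allvars (Eq x y) = {x, y}" | "allvars (Rel x y) = {x, y}"
| "allvars (Neg a) = allvars a" | "allvars (Conj a b) = allvars a \<union> allvars b"
| "allvars (Ex x a) = insert x (allvars a)"

lemma finite_allvars: "finite (allvars a)"
  by (induction a) auto

lemma freevars_allvars: "freevars a \<subseteq> allvars a"
  by (induction a) auto

lemma SimD1: "Sim A fA S B fB S' Cap n V e e' \<pi> P \<Longrightarrow> x \<in> V \<Longrightarrow> y \<in> V \<Longrightarrow> reduced w \<Longrightarrow> set w \<subseteq> P \<Longrightarrow>
   length w \<le> 2^n \<Longrightarrow> (wact fA w (e x) = e y \<longleftrightarrow> wact fB (map \<pi> w) (e' x) = e' y)"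
  unfolding Sim_def by blast

lemma SimD2: "Sim A fA S B fB S' Cap n V e e' \<pi> P \<Longrightarrow> x \<in> V \<Longrightarrow> y \<in> V \<Longrightarrow> reduced w \<Longrightarrow> set w \<subseteq> S \<Longrightarrow>
   length w \<le> 2^n \<Longrightarrow> wact fA w (e x) = e y \<Longrightarrow> set w \<subseteq> P"
  unfolding Sim_def by blast

lemma SimD3: "Sim A fA S B fB S' Cap n V e e' \<pi> P \<Longrightarrow> x \<in> V \<Longrightarrow> y \<in> V \<Longrightarrow> reduced w \<Longrightarrow> set w \<subseteq> S' \<Longrightarrow>
   length w \<le> 2^n \<Longrightarrow> wact fB w (e' x) = e' y \<Longrightarrow> set w \<subseteq> \<pi> ` P"
  unfolding Sim_def by blast

context ef
begin

lemma equiv: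
  assumes "Sim A fA S B fB S' Cap n (freevars \<phi>) e e' \<pi> P" "qd \<phi> \<le> n" "card (allvars \<phi>) \<le> N" "2^n \<le> L"
  shows "sat A (\<lambda>u v. \<exists>i\<in>S. v = fA i u) e \<phi> \<longleftrightarrow> sat B (\<lambda>u v. \<exists>i\<in>S'. v = fB i u) e' \<phi>"
  using assms
proof (induction \<phi> arbitrary: n e e' \<pi> P)
  case Tru
  then show ?case by simp
next
  case (Eq x y)
  have "wact fA [] (e x) = e y \<longleftrightarrow> wact fB (map \<pi> []) (e' x) = e' y"
    by (rule SimD1[OF Eq.prems(1)]) auto
  then show ?case by simp
next
  case (Rel x y)
  note sim = Rel.prems(1)
  have xy: "x \<in> freevars (Rel x y)" "y \<in> freevars (Rel x y)" by auto
  have len: "length [i] \<le> 2^n" for i :: nat by simp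
  have PS: "P \<subseteq> S" and piS: "\<pi> ` P \<subseteq> S'" using sim unfolding Sim_def by blast+
  show ?case
  proof
    assume "sat A (\<lambda>u v. \<exists>i\<in>S. v = fA i u) e (Rel x y)"
    then obtain i where i: "i \<in> S" "e y = fA i (e x)" by auto
    then have w: "wact fA [i] (e x) = e y" by simp
    have iP: "set [i] \<subseteq> P" by (rule SimD2[OF sim xy _ _ len w]) (use i in auto)
    have "wact fB (map \<pi> [i]) (e' x) = e' y" using SimD1[OF sim xy _ iP len] w by simp
    then have "e' y = fB (\<pi> i) (e' x)" by simp
    moreover have "\<pi> i \<in> S'" using piS iP by auto
    ultimately show "sat B (\<lambda>u v. \<exists>i\<in>S'. v = fB i u) e' (Rel x y)" by auto
  next
    assume "sat B (\<lambda>u v. \<exists>i\<in>S'. v = fB i u) e' (Rel x y)"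
    then obtain j where j: "j \<in> S'" "e' y = fB j (e' x)" by auto
    then have w: "wact fB [j] (e' x) = e' y" by simp
    have "set [j] \<subseteq> \<pi> ` P" by (rule SimD3[OF sim xy _ _ len w]) (use j in auto)
    then obtain i where i: "i \<in> P" "j = \<pi> i" by auto
    have "wact fB (map \<pi> [i]) (e' x) = e' y" using j i by simp
    then have "wact fA [i] (e x) = e y" using SimD1[OF sim xy _ _ len, of i] i(1) by simp
    then show "sat A (\<lambda>u v. \<exists>i\<in>S. v = fA i u) e (Rel x y)" using i(1) PS by (auto intro!: bexI[of _ i])
  qed
next
  case (Neg \<phi>)
  then show ?case by simp
next
  case (Conj \<phi>1 \<phi>2)
  have s1: "Sim A fA S B fB S' Cap n (freevars \<phi>1) e e' \<pi> P"
    by (rule Sim_mono[OF Conj.prems(1)]) auto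
  have s2: "Sim A fA S B fB S' Cap n (freevars \<phi>2) e e' \<pi> P"
    by (rule Sim_mono[OF Conj.prems(1)]) auto
  have c1: "card (allvars \<phi>1) \<le> N"
    using Conj.prems(3) card_mono[OF finite_allvars, of "allvars \<phi>1" "Conj \<phi>1 \<phi>2"] by auto
  have c2: "card (allvars \<phi>2) \<le> N"
    using Conj.prems(3) card_mono[OF finite_allvars, of "allvars \<phi>2" "Conj \<phi>1 \<phi>2"] by auto
  show ?case using Conj.IH(1)[OF s1 _ c1] Conj.IH(2)[OF s2 _ c2] Conj.prems by simp
next
  case (Ex x \<psi>)
  define V where "V = freevars \<psi> - {x}"
  have fv: "freevars (Ex x \<psi>) = V" unfolding V_def by simp
  have sim: "Sim A fA S B fB S' Cap n V e e' \<pi> P" using Ex.prems(1) fv by simp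
  have n: "0 < n" using Ex.prems(2) by simp
  have qd: "qd \<psi> \<le> n - 1" using Ex.prems(2) by simp
  have L: "2^(n-1) \<le> L" using Ex.prems(4) n by (metis diff_le_self le_trans one_le_numeral power_increasing)
  have finV: "finite V" using freevars_allvars[of \<psi>] finite_allvars[of \<psi>] unfolding V_def
    by (meson finite_Diff finite_subset)
  have cV: "card V \<le> N"
  proof -
    have "V \<subseteq> allvars (Ex x \<psi>)" using freevars_allvars[of \<psi>] unfolding V_def by auto
    then have "card V \<le> card (allvars (Ex x \<psi>))" using finite_allvars card_mono by blast
    then show ?thesis using Ex.prems(3) by simp
  qed
  have c\<psi>: "card (allvars \<psi>) \<le> N"
    using Ex.prems(3) card_insert_le[of "allvars \<psi>" x] by simp
  have xV: "x \<notin> V" unfolding V_def by simp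
  have sub: "freevars \<psi> \<subseteq> insert x V" unfolding V_def by auto
  show ?case
  proof
    assume "sat A (\<lambda>u v. \<exists>i\<in>S. v = fA i u) e (Ex x \<psi>)"
    then obtain a where a: "a \<in> A" "sat A (\<lambda>u v. \<exists>i\<in>S. v = fA i u) (e(x := a)) \<psi>" by auto
    obtain b \<pi>' P' where b: "b \<in> B" and s: "Sim A fA S B fB S' Cap (n - 1) (insert x V) (e(x := a)) (e'(x := b)) \<pi>' P'"
      using forth[OF sim n Ex.prems(4) finV cV xV a(1)] by blast
    have "sat B (\<lambda>u v. \<exists>i\<in>S'. v = fB i u) (e'(x := b)) \<psi>"
      using Ex.IH[OF Sim_mono[OF s sub] qd c\<psi> L] a(2) by blast
    then show "sat B (\<lambda>u v. \<exists>i\<in>S'. v = fB i u) e' (Ex x \<psi>)" using b by auto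
  next
    assume "sat B (\<lambda>u v. \<exists>i\<in>S'. v = fB i u) e' (Ex x \<psi>)"
    then obtain b where b: "b \<in> B" "sat B (\<lambda>u v. \<exists>i\<in>S'. v = fB i u) (e'(x := b)) \<psi>" by auto
    obtain a \<pi>' P' where a: "a \<in> A" and s: "Sim B fB S' A fA S Cap (n - 1) (insert x V) (e'(x := b)) (e(x := a)) \<pi>' P'"
      using ef.forth[OF swap Sim_swap[OF sim] n Ex.prems(4) finV cV xV b(1)] by blast
    have "sat A (\<lambda>u v. \<exists>i\<in>S. v = fA i u) (e(x := a)) \<psi>"
      using Ex.IH[OF Sim_mono[OF Sim_swap[OF s] sub] qd c\<psi> L] b(2) by blast
    then show "sat A (\<lambda>u v. \<exists>i\<in>S. v = fA i u) e (Ex x \<psi>)" using a by auto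
  qed
qed

lemma sentence_equiv:
  assumes "sentence \<phi>" "qd \<phi> \<le> n" "card (allvars \<phi>) \<le> N" "2^n \<le> L" "n * 2^n \<le> Cap"
  shows "sat A (\<lambda>u v. \<exists>i\<in>S. v = fA i u) e \<phi> \<longleftrightarrow> sat B (\<lambda>u v. \<exists>i\<in>S'. v = fB i u) e' \<phi>"
proof -
  have "Sim A fA S B fB S' Cap n (freevars \<phi>) e e' id {}"
    using assms(1,5) unfolding Sim_def sentence_def by simp
  then show ?thesis using equiv assms by blast
qed

end


lemma sat_All: "sat D R e (All x a) \<longleftrightarrow> (\<forall>d\<in>D. sat D R (e(x := d)) a)"
  by (simp add: All_def)

lemma sat_Imp: "sat D R e (Imp a b) \<longleftrightarrow> (sat D R e a \<longrightarrow> sat D R e b)"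
  by (simp add: Imp_def)

lemma sat_big_conj: "sat D R e (big_conj xs) \<longleftrightarrow> (\<forall>a\<in>set xs. sat D R e a)"
  by (induction xs) (auto simp: big_conj_def)

lemma sat_big_disj: "sat D R e (big_disj xs) \<longleftrightarrow> (\<exists>a\<in>set xs. sat D R e a)"
  by (simp add: big_disj_def sat_big_conj)

lemma sat_alls: "sat D R e (alls xs a) \<longleftrightarrow>
   (\<forall>e'. (\<forall>v. v \<notin> set xs \<longrightarrow> e' v = e v) \<longrightarrow> (\<forall>v\<in>set xs. e' v \<in> D) \<longrightarrow> sat D R e' a)"
proof (induction xs arbitrary: e)
  case Nil
  have eq: "\<And>e'. (\<forall>v. v \<notin> set [] \<longrightarrow> e' v = e v) \<longleftrightarrow> e' = e" by (auto simp: fun_eq_iff)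
  show ?case by (simp only: alls_def foldr.simps eq) simp
next
  case (Cons x xs)
  have "sat D R e (alls (x # xs) a) \<longleftrightarrow> (\<forall>d\<in>D. sat D R (e(x := d)) (alls xs a))"
    by (simp add: alls_def sat_All)
  also have "\<dots> \<longleftrightarrow> (\<forall>e'. (\<forall>v. v \<notin> set (x # xs) \<longrightarrow> e' v = e v) \<longrightarrow> (\<forall>v\<in>set (x # xs). e' v \<in> D) \<longrightarrow> sat D R e' a)"
  proof
    assume H: "\<forall>d\<in>D. sat D R (e(x := d)) (alls xs a)"
    show "\<forall>e'. (\<forall>v. v \<notin> set (x # xs) \<longrightarrow> e' v = e v) \<longrightarrow> (\<forall>v\<in>set (x # xs). e' v \<in> D) \<longrightarrow> sat D R e' a"
    proof (intro allI impI)
      fix e' assume a1: "\<forall>v. v \<notin> set (x # xs) \<longrightarrow> e' v = e v" and a2: "\<forall>v\<in>set (x # xs). e' v \<in> D"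
      have "sat D R (e(x := e' x)) (alls xs a)" using H a2 by simp
      moreover have "\<forall>v. v \<notin> set xs \<longrightarrow> e' v = (e(x := e' x)) v" using a1 by auto
      ultimately show "sat D R e' a" using Cons.IH[of "e(x := e' x)"] a2 by auto
    qed
  next
    assume H: "\<forall>e'. (\<forall>v. v \<notin> set (x # xs) \<longrightarrow> e' v = e v) \<longrightarrow> (\<forall>v\<in>set (x # xs). e' v \<in> D) \<longrightarrow> sat D R e' a"
    show "\<forall>d\<in>D. sat D R (e(x := d)) (alls xs a)"
    proof
      fix d assume d: "d \<in> D"
      show "sat D R (e(x := d)) (alls xs a)"
        unfolding Cons.IH
      proof (intro allI impI)
        fix e' assume a1: "\<forall>v. v \<notin> set xs \<longrightarrow> e' v = (e(x := d)) v" and a2: "\<forall>v\<in>set xs. e' v \<in> D"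
        have "\<forall>v\<in>set (x # xs). e' v \<in> D" using a1 a2 d by (metis fun_upd_same set_ConsD)
        moreover have "\<forall>v. v \<notin> set (x # xs) \<longrightarrow> e' v = e v" using a1 by auto
        ultimately show "sat D R e' a" using H by blast
      qed
    qed
  qed
  finally show ?case .
qed

lemma sat_exs: "sat D R e (exs xs a) \<longleftrightarrow>
   (\<exists>e'. (\<forall>v. v \<notin> set xs \<longrightarrow> e' v = e v) \<and> (\<forall>v\<in>set xs. e' v \<in> D) \<and> sat D R e' a)"
proof (induction xs arbitrary: e)
  case Nil
  have eq: "\<And>e'. (\<forall>v. v \<notin> set [] \<longrightarrow> e' v = e v) \<longleftrightarrow> e' = e" by (auto simp: fun_eq_iff)
  show ?case by (simp only: exs_def foldr.simps eq) simp
next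
  case (Cons x xs)
  have "sat D R e (exs (x # xs) a) \<longleftrightarrow> (\<exists>d\<in>D. sat D R (e(x := d)) (exs xs a))"
    by (simp add: exs_def)
  also have "\<dots> \<longleftrightarrow> (\<exists>e'. (\<forall>v. v \<notin> set (x # xs) \<longrightarrow> e' v = e v) \<and> (\<forall>v\<in>set (x # xs). e' v \<in> D) \<and> sat D R e' a)"
  proof
    assume "\<exists>d\<in>D. sat D R (e(x := d)) (exs xs a)"
    then obtain d e' where d: "d \<in> D" and a1: "\<forall>v. v \<notin> set xs \<longrightarrow> e' v = (e(x := d)) v"
      and a2: "\<forall>v\<in>set xs. e' v \<in> D" and s: "sat D R e' a" using Cons.IH by blast
    have "\<forall>v\<in>set (x # xs). e' v \<in> D" using a1 a2 d by (metis fun_upd_same set_ConsD)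
    moreover have "\<forall>v. v \<notin> set (x # xs) \<longrightarrow> e' v = e v" using a1 by auto
    ultimately show "\<exists>e'. (\<forall>v. v \<notin> set (x # xs) \<longrightarrow> e' v = e v) \<and> (\<forall>v\<in>set (x # xs). e' v \<in> D) \<and> sat D R e' a"
      using s by blast
  next
    assume "\<exists>e'. (\<forall>v. v \<notin> set (x # xs) \<longrightarrow> e' v = e v) \<and> (\<forall>v\<in>set (x # xs). e' v \<in> D) \<and> sat D R e' a"
    then obtain e' where a1: "\<forall>v. v \<notin> set (x # xs) \<longrightarrow> e' v = e v" and a2: "\<forall>v\<in>set (x # xs). e' v \<in> D"
      and s: "sat D R e' a" by blast
    have "\<forall>v. v \<notin> set xs \<longrightarrow> e' v = (e(x := e' x)) v" using a1 by auto
    then have "sat D R (e(x := e' x)) (exs xs a)" unfolding Cons.IH using a2 s by (intro exI[of _ e']) auto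
    then show "\<exists>d\<in>D. sat D R (e(x := d)) (exs xs a)" using a2 by auto
  qed
  finally show ?case .
qed

lemma sat_distinct_vars: "sat D R e (distinct_vars xs) \<longleftrightarrow>
   (\<forall>i j. i < j \<longrightarrow> j < length xs \<longrightarrow> e (xs ! i) \<noteq> e (xs ! j))"
  unfolding distinct_vars_def sat_big_conj by (simp add: set_concat) fastforce

lemma sat_cong: "(\<forall>v\<in>freevars a. e v = e' v) \<Longrightarrow> sat D R e a = sat D R e' a"
proof (induction a arbitrary: e e')
  case (Ex x a)
  have eq: "sat D R (e(x := d)) a = sat D R (e'(x := d)) a" for d
    by (rule Ex.IH) (use Ex.prems in auto)
  then show ?case by simp
next
  case (Conj a1 a2)
  have "sat D R e a1 = sat D R e' a1" by (rule Conj.IH(1)) (use Conj.prems in auto)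
  moreover have "sat D R e a2 = sat D R e' a2" by (rule Conj.IH(2)) (use Conj.prems in auto)
  ultimately show ?case by simp
qed auto

lemma sat_transport:
  assumes "inj_on f D" "\<forall>n. e n \<in> D"
  shows "sat (f ` D) (\<lambda>u v. R (inv_into D f u) (inv_into D f v)) (f \<circ> e) a = sat D R e a"
  using assms(2)
proof (induction a arbitrary: e)
  case (Rel x y)
  then show ?case using assms(1) by simp
next
  case (Eq x y)
  then show ?case using assms(1) by (simp add: inj_on_eq_iff)
next
  case (Ex x a)
  have main: "sat (f ` D) (\<lambda>u v. R (inv_into D f u) (inv_into D f v)) ((f \<circ> e)(x := f d)) a = sat D R (e(x := d)) a"
    if "d \<in> D" for d
  proof -
    have eq: "(f \<circ> e)(x := f d) = f \<circ> (e(x := d))" by auto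
    have en: "\<forall>n. (e(x := d)) n \<in> D" using Ex.prems that by simp
    have "sat (f ` D) (\<lambda>u v. R (inv_into D f u) (inv_into D f v)) (f \<circ> (e(x := d))) a = sat D R (e(x := d)) a"
      by (rule Ex.IH[OF en])
    then show ?thesis by (simp only: eq)
  qed
  let ?R = "\<lambda>u v. R (inv_into D f u) (inv_into D f v)"
  have "sat (f ` D) ?R (f \<circ> e) (Ex x a) = (\<exists>d'\<in>f ` D. sat (f ` D) ?R ((f \<circ> e)(x := d')) a)"
    by (simp only: sat.simps)
  also have "\<dots> = (\<exists>d\<in>D. sat (f ` D) ?R ((f \<circ> e)(x := f d)) a)" by blast
  also have "\<dots> = (\<exists>d\<in>D. sat D R (e(x := d)) a)" using main by blast
  also have "\<dots> = sat D R e (Ex x a)" by simp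
  finally show ?case .
qed auto

lemma holds_transport:
  fixes f :: "'a \<Rightarrow> 'b" and D :: "'a set"
  assumes "inj_on f D"
  shows "holds (f ` D) (\<lambda>u v. R (inv_into D f u) (inv_into D f v)) a = holds D R a"
proof
  assume H: "holds (f ` D) (\<lambda>u v. R (inv_into D f u) (inv_into D f v)) a"
  show "holds D R a" unfolding holds_def
  proof (intro allI impI)
    fix e :: "nat \<Rightarrow> 'a" assume eD: "\<forall>n. e n \<in> D"
    have "\<forall>n. (f \<circ> e) n \<in> f ` D" using eD by simp
    then have "sat (f ` D) (\<lambda>u v. R (inv_into D f u) (inv_into D f v)) (f \<circ> e) a"
      using H unfolding holds_def by blast
    then show "sat D R e a" using sat_transport[OF assms eD] by simp
  qed
next
  assume H: "holds D R a"
  show "holds (f ` D) (\<lambda>u v. R (inv_into D f u) (inv_into D f v)) a" unfolding holds_def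
  proof (intro allI impI)
    fix e' :: "nat \<Rightarrow> 'b" assume e': "\<forall>n. e' n \<in> f ` D"
    define e where "e = inv_into D f \<circ> e'"
    have eD: "\<forall>n. e n \<in> D" using e' unfolding e_def by (auto intro: inv_into_into)
    have "f \<circ> e = e'" using e' unfolding e_def by (auto simp: f_inv_into_f)
    moreover have "sat D R e a" using H eD unfolding holds_def by blast
    then have "sat (f ` D) (\<lambda>u v. R (inv_into D f u) (inv_into D f v)) (f \<circ> e) a"
      using sat_transport[OF assms eD] by simp
    ultimately show "sat (f ` D) (\<lambda>u v. R (inv_into D f u) (inv_into D f v)) e' a" by simp
  qed
qed

lemma pf_transfer:
  fixes B :: "'b::countable set" and A :: "'a set"
  assumes ent: "entails T \<phi>" and sen: "sentence \<phi>" and Bne: "B \<noteq> {}"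
    and BT: "\<forall>b\<in>T. holds B RB b" and finA: "finite A" and Ane: "A \<noteq> {}"
    and eqv: "\<And>e e'. sat A RA e \<phi> \<longleftrightarrow> sat B RB e' \<phi>"
  shows "\<exists>(D::nat set) R. finite D \<and> D \<noteq> {} \<and> holds D R \<phi>"
proof -
  have injB: "inj_on to_nat B" by (rule inj_on_subset[OF inj_to_nat]) simp
  have "\<forall>b\<in>T. holds (to_nat ` B) (\<lambda>u v. RB (inv_into B to_nat u) (inv_into B to_nat v)) b"
    using BT holds_transport[OF injB] by blast
  then have "holds (to_nat ` B) (\<lambda>u v. RB (inv_into B to_nat u) (inv_into B to_nat v)) \<phi>"
    using ent Bne unfolding entails_def by (meson image_is_empty)
  then have hB: "holds B RB \<phi>" using holds_transport[OF injB] by blast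
  obtain b0 where b0: "b0 \<in> B" using Bne by blast
  have "sat B RB (\<lambda>_. b0) \<phi>" using hB b0 unfolding holds_def by simp
  then have hA: "holds A RA \<phi>" using eqv unfolding holds_def by blast
  obtain h where h: "bij_betw h A {0..<card A}" using ex_bij_betw_finite_nat[OF finA] by blast
  have injA: "inj_on h A" and imA: "h ` A = {0..<card A}" using h by (auto simp: bij_betw_def)
  have H: "holds (h ` A) (\<lambda>u v. RA (inv_into A h u) (inv_into A h v)) \<phi>"
    using hA holds_transport[OF injA] by blast
  have F: "finite (h ` A)" "h ` A \<noteq> {}" using finA Ane by auto
  show ?thesis
    by (rule exI[of _ "h ` A"], rule exI[of _ "\<lambda>u v. RA (inv_into A h u) (inv_into A h v)"]) (use H F in simp)
qed


definition Xs :: "nat set \<Rightarrow> nat \<Rightarrow> nat list set" where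
  "Xs S L = {w. reduced w \<and> set w \<subseteq> S \<and> length w \<le> L}"

definition sig :: "nat set \<Rightarrow> nat \<Rightarrow> nat \<Rightarrow> nat list \<Rightarrow> nat list" where
  "sig S L i w = (if w \<in> Xs S L \<and> rc i w \<in> Xs S L then rc i w else w)"

definition Gam :: "nat set \<Rightarrow> nat \<Rightarrow> (nat list \<Rightarrow> nat list) set" where
  "Gam S L = {g. bij_betw g (Xs S L) (Xs S L) \<and> (\<forall>x. x \<notin> Xs S L \<longrightarrow> g x = x)}"

definition Astr :: "nat set \<Rightarrow> nat \<Rightarrow> nat \<Rightarrow> ((nat list \<Rightarrow> nat list) \<times> nat) set" where
  "Astr S L K = Gam S L \<times> {0..<K}"

definition fAstr :: "nat set \<Rightarrow> nat \<Rightarrow> nat \<Rightarrow> (nat list \<Rightarrow> nat list) \<times> nat \<Rightarrow> (nat list \<Rightarrow> nat list) \<times> nat" where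
  "fAstr S L i p = (sig S L i \<circ> fst p, snd p)"

definition Bstr :: "nat set \<Rightarrow> nat \<Rightarrow> (nat list \<times> nat) set" where
  "Bstr S K = {w. reduced w \<and> set w \<subseteq> S} \<times> {0..<K}"

definition fBstr :: "nat \<Rightarrow> nat list \<times> nat \<Rightarrow> nat list \<times> nat" where
  "fBstr i p = (rc i (fst p), snd p)"

lemma sig_sig: "sig S L i (sig S L i w) = w"
proof (cases "w \<in> Xs S L \<and> rc i w \<in> Xs S L")
  case True
  have rr: "rc i (rc i w) = w" using True rc_rc unfolding Xs_def by blast
  have "sig S L i w = rc i w" using True unfolding sig_def by simp
  moreover have "sig S L i (rc i w) = w" using True rr unfolding sig_def by simp
  ultimately show ?thesis by simp
next
  case False
  then have "sig S L i w = w" unfolding sig_def by auto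
  then show ?thesis by simp
qed

lemma sig_X: "w \<in> Xs S L \<Longrightarrow> sig S L i w \<in> Xs S L"
  unfolding sig_def by auto

lemma sig_out: "w \<notin> Xs S L \<Longrightarrow> sig S L i w = w"
  unfolding sig_def by auto

lemma bij_sig: "bij_betw (sig S L i) (Xs S L) (Xs S L)"
  unfolding bij_betw_def
proof
  show "inj_on (sig S L i) (Xs S L)" by (metis inj_onI sig_sig)
  show "sig S L i ` Xs S L = Xs S L"
  proof
    show "sig S L i ` Xs S L \<subseteq> Xs S L" using sig_X by blast
    show "Xs S L \<subseteq> sig S L i ` Xs S L"
    proof
      fix y assume "y \<in> Xs S L"
      then have "sig S L i y \<in> Xs S L" "sig S L i (sig S L i y) = y" using sig_X sig_sig by auto
      then show "y \<in> sig S L i ` Xs S L" by (metis image_eqI)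
    qed
  qed
qed

lemma Gam_closed: "g \<in> Gam S L \<Longrightarrow> sig S L i \<circ> g \<in> Gam S L"
  unfolding Gam_def using bij_betw_trans[OF _ bij_sig] sig_out by auto

lemma id_Gam: "id \<in> Gam S L"
  unfolding Gam_def by auto

lemma invol_A: "invol (fAstr S L) S (Astr S L K)"
  unfolding invol_def
proof (intro ballI conjI)
  fix i p assume "i \<in> S" "p \<in> Astr S L K"
  then show "fAstr S L i p \<in> Astr S L K" unfolding Astr_def fAstr_def using Gam_closed by (cases p) auto
  show "fAstr S L i (fAstr S L i p) = p" unfolding fAstr_def by (cases p) (auto simp: fun_eq_iff sig_sig)
qed

lemma wact_A: "wact (fAstr S L) w p = (wact (sig S L) w \<circ> fst p, snd p)"
  by (induction w) (auto simp: fAstr_def fun_eq_iff)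

lemma wact_sig_nil: "v \<in> Xs S L \<Longrightarrow> wact (sig S L) v [] = v"
proof (induction v)
  case (Cons i v)
  have r: "reduced v" "v = [] \<or> hd v \<noteq> i" using Cons.prems unfolding Xs_def by (auto simp: reduced_Cons)
  have vX: "v \<in> Xs S L" using Cons.prems r unfolding Xs_def by auto
  have "rc i v = i # v" using rc_Cons_ne r by blast
  then show ?case using Cons.IH[OF vX] vX Cons.prems unfolding sig_def by simp
qed simp

lemma girth_A:
  assumes "p \<in> Astr S L K" "reduced w" "set w \<subseteq> S" "w \<noteq> []" "length w \<le> L"
  shows "wact (fAstr S L) w p \<noteq> p"
proof
  assume eq: "wact (fAstr S L) w p = p"
  obtain g c where p: "p = (g, c)" by (cases p)
  have g: "g \<in> Gam S L" using assms(1) p unfolding Astr_def by auto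
  then have "g ` Xs S L = Xs S L" unfolding Gam_def bij_betw_def by auto
  moreover have "[] \<in> Xs S L" unfolding Xs_def by simp
  ultimately obtain x0 where x0: "x0 \<in> Xs S L" "g x0 = []" by (metis imageE)
  have "wact (sig S L) w \<circ> g = g" using eq p by (simp add: wact_A)
  then have "wact (sig S L) w (g x0) = g x0" by (metis comp_apply)
  then have "wact (sig S L) w [] = []" using x0 by simp
  moreover have "wact (sig S L) w [] = w" using wact_sig_nil assms(2,3,5) unfolding Xs_def by blast
  ultimately show False using assms(4) by simp
qed

lemma finite_Xs: "finite S \<Longrightarrow> finite (Xs S L)"
  by (rule finite_subset[OF _ finite_lists_length_le[of S L]]) (auto simp: Xs_def)

lemma finite_Gam:
  assumes "finite S"
  shows "finite (Gam S L)"
proof -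
  let ?X = "Xs S L"
  let ?h = "\<lambda>g x. if x \<in> ?X then g x else undefined"
  have "inj_on ?h (Gam S L)"
  proof (rule inj_onI)
    fix g1 g2 assume g: "g1 \<in> Gam S L" "g2 \<in> Gam S L" and eq: "?h g1 = ?h g2"
    show "g1 = g2"
    proof
      fix x show "g1 x = g2 x"
      proof (cases "x \<in> ?X")
        case True then show ?thesis using fun_cong[OF eq, of x] by simp
      next
        case False then show ?thesis using g unfolding Gam_def by auto
      qed
    qed
  qed
  moreover have "?h ` Gam S L \<subseteq> {f. \<forall>x. (x \<in> ?X \<longrightarrow> f x \<in> ?X) \<and> (x \<notin> ?X \<longrightarrow> f x = undefined)}"
    unfolding Gam_def bij_betw_def by auto
  moreover have "finite {f. \<forall>x. (x \<in> ?X \<longrightarrow> f x \<in> ?X) \<and> (x \<notin> ?X \<longrightarrow> f x = undefined)}"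
    by (rule finite_set_of_finite_funs) (use finite_Xs[OF assms] in auto)
  ultimately show ?thesis by (meson finite_imageD finite_subset)
qed

lemma finite_Astr: "finite S \<Longrightarrow> finite (Astr S L K)"
  unfolding Astr_def using finite_Gam by auto

lemma Astr_ne: "0 < K \<Longrightarrow> Astr S L K \<noteq> {}"
  unfolding Astr_def using id_Gam by auto

lemma snd_wact_A: "snd (wact (fAstr S L) w p) = snd p"
  by (simp add: wact_A)

lemma free_copy:
  assumes "finite Y" "card Y \<le> N"
  shows "\<exists>c\<in>{0..<Suc N}. c \<notin> snd ` Y"
proof (rule ccontr)
  assume "\<not> ?thesis"
  then have "{0..<Suc N} \<subseteq> snd ` Y" by auto
  then have "card {0..<Suc N} \<le> card (snd ` Y)" using assms(1) by (intro card_mono) auto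
  also have "\<dots> \<le> card Y" using assms(1) by (rule card_image_le)
  finally show False using assms(2) by simp
qed

lemma far_A:
  assumes "Y \<subseteq> Astr S L (Suc N)" "finite Y" "card Y \<le> N"
  shows "\<exists>a\<in>Astr S L (Suc N). \<forall>y\<in>Y. \<forall>w. set w \<subseteq> S \<longrightarrow> length w \<le> L' \<longrightarrow> wact (fAstr S L) w y \<noteq> a"
proof -
  obtain c where c: "c \<in> {0..<Suc N}" "c \<notin> snd ` Y" using free_copy[OF assms(2,3)] by blast
  have "(id, c) \<in> Astr S L (Suc N)" using c id_Gam unfolding Astr_def by auto
  moreover have "\<forall>y\<in>Y. \<forall>w. wact (fAstr S L) w y \<noteq> (id, c)"
    using c snd_wact_A by (metis image_eqI snd_conv)
  ultimately show ?thesis by blast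
qed

lemma invol_B: "invol fBstr S (Bstr S K)"
  unfolding invol_def
proof (intro ballI conjI)
  fix i p assume i: "i \<in> S" and p: "p \<in> Bstr S K"
  then show "fBstr i p \<in> Bstr S K" unfolding Bstr_def fBstr_def
    using rc_reduced set_rc by (cases p) fastforce
  show "fBstr i (fBstr i p) = p" using p unfolding fBstr_def Bstr_def by (cases p) (auto simp: rc_rc)
qed

lemma wact_B: "reduced (fst p) \<Longrightarrow> wact fBstr v p = (red (v @ fst p), snd p)"
  by (induction v) (auto simp: fBstr_def reduced_red)

lemma girth_B:
  assumes "p \<in> Bstr S K" "reduced w" "w \<noteq> []"
  shows "wact fBstr w p \<noteq> p"
proof -
  have r: "reduced (fst p)" using assms(1) unfolding Bstr_def by auto
  show ?thesis using wact_B[OF r] red_nonempty_fix[OF assms(2) r assms(3)] by (cases p) auto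
qed

lemma snd_wact_B: "snd (wact fBstr w p) = snd p"
  by (induction w) (auto simp: fBstr_def)

lemma far_B:
  assumes "Y \<subseteq> Bstr S (Suc N)" "finite Y" "card Y \<le> N"
  shows "\<exists>a\<in>Bstr S (Suc N). \<forall>y\<in>Y. \<forall>w. set w \<subseteq> S \<longrightarrow> length w \<le> L' \<longrightarrow> wact fBstr w y \<noteq> a"
proof -
  obtain c where c: "c \<in> {0..<Suc N}" "c \<notin> snd ` Y" using free_copy[OF assms(2,3)] by blast
  have "([], c) \<in> Bstr S (Suc N)" using c unfolding Bstr_def by auto
  moreover have "\<forall>y\<in>Y. \<forall>w. wact fBstr w y \<noteq> ([], c)"
    using c snd_wact_B by (metis image_eqI snd_conv)
  ultimately show ?thesis by blast
qed

lemma Bstr_ne: "0 < K \<Longrightarrow> Bstr S K \<noteq> {}"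
proof -
  assume "0 < K"
  then have "([], 0) \<in> Bstr S K" unfolding Bstr_def by simp
  then show ?thesis by blast
qed

lemma ext_inj:
  assumes "finite P" "inj_on \<pi> P" "\<pi> ` P \<subseteq> T" "finite X"
    "infinite T \<or> card (X - P) + card P \<le> card T"
  shows "\<exists>\<pi>'. inj_on \<pi>' (P \<union> X) \<and> \<pi>' ` (P \<union> X) \<subseteq> T \<and> (\<forall>i\<in>P. \<pi>' i = \<pi> i)"
proof -
  let ?X0 = "X - P" and ?T0 = "T - \<pi> ` P"
  have fX0: "finite ?X0" using assms(4) by simp
  obtain g where g: "g ` ?X0 \<subseteq> ?T0" "inj_on g ?X0"
  proof (cases "finite T")
    case False
    then have "infinite ?T0" using assms(1) by simp
    then obtain C where C: "finite C" "card C = card ?X0" "C \<subseteq> ?T0"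
      using infinite_arbitrarily_large by blast
    then show ?thesis using card_le_inj[OF fX0 C(1)] that by (metis order_refl subset_trans image_mono)
  next
    case True
    have "card ?T0 = card T - card (\<pi> ` P)" using card_Diff_subset[OF finite_imageI[OF assms(1)] assms(3)] .
    also have "\<dots> = card T - card P" using card_image[OF assms(2)] by simp
    finally have "card ?X0 \<le> card ?T0" using assms(5) True by simp
    then show ?thesis using card_le_inj[OF fX0] True that by blast
  qed
  define \<pi>' where "\<pi>' i = (if i \<in> P then \<pi> i else g i)" for i
  have "inj_on \<pi>' (P \<union> X)"
  proof (rule inj_onI)
    fix x y assume x: "x \<in> P \<union> X" and y: "y \<in> P \<union> X" and eq: "\<pi>' x = \<pi>' y"
    show "x = y"
    proof (cases "x \<in> P"; cases "y \<in> P")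
      assume "x \<in> P" "y \<in> P" then show ?thesis using eq assms(2) unfolding \<pi>'_def by (auto dest: inj_onD)
    next
      assume "x \<in> P" "y \<notin> P"
      then have "g y \<in> ?T0" using g y by auto
      moreover have "\<pi> x = g y" using eq \<open>x \<in> P\<close> \<open>y \<notin> P\<close> unfolding \<pi>'_def by simp
      ultimately have False using \<open>x \<in> P\<close> by (metis DiffD2 image_eqI)
      then show ?thesis ..
    next
      assume "x \<notin> P" "y \<in> P"
      then have "g x \<in> ?T0" using g x by auto
      moreover have "\<pi> y = g x" using eq \<open>x \<notin> P\<close> \<open>y \<in> P\<close> unfolding \<pi>'_def by simp
      ultimately have False using \<open>y \<in> P\<close> by (metis DiffD2 image_eqI)
      then show ?thesis ..
    next
      assume "x \<notin> P" "y \<notin> P"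
      then show ?thesis using eq g(2) x y unfolding \<pi>'_def by (auto dest: inj_onD)
    qed
  qed
  moreover have "\<pi>' ` (P \<union> X) \<subseteq> T" using assms(3) g(1) unfolding \<pi>'_def by auto
  moreover have "\<forall>i\<in>P. \<pi>' i = \<pi> i" unfolding \<pi>'_def by simp
  ultimately show ?thesis by blast
qed


lemma nbr_distinct:
  assumes inv: "invol f S B" and G: "\<And>x w. x \<in> B \<Longrightarrow> reduced w \<Longrightarrow> set w \<subseteq> S \<Longrightarrow> w \<noteq> [] \<Longrightarrow> wact f w x \<noteq> x"
    and "i \<in> S" "j \<in> S" "i \<noteq> j" "d \<in> B"
  shows "f i d \<noteq> f j d"
proof
  assume eq: "f i d = f j d"
  have "wact f [j, i] d = f j (f i d)" by simp
  also have "\<dots> = d" using eq involD(2)[OF inv assms(4,6)] by simp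
  finally show False using G[OF assms(6), of "[j, i]"] assms by auto
qed

lemma Gr_holds:
  assumes inv: "invol f S B" and G: "\<And>x w. x \<in> B \<Longrightarrow> reduced w \<Longrightarrow> set w \<subseteq> S \<Longrightarrow> w \<noteq> [] \<Longrightarrow> wact f w x \<noteq> x"
  shows "\<forall>b\<in>Gr. holds B (\<lambda>u v. \<exists>i\<in>S. v = f i u) b"
proof -
  have 1: "holds B (\<lambda>u v. \<exists>i\<in>S. v = f i u) (All 0 (Neg (Rel 0 0)))"
    unfolding holds_def
  proof (intro allI impI)
    fix e :: "nat \<Rightarrow> 'a"
    have "\<not> (d = f i d)" if "d \<in> B" "i \<in> S" for d i
      using G[OF that(1), of "[i]"] that by auto
    then show "sat B (\<lambda>u v. \<exists>i\<in>S. v = f i u) e (All 0 (Neg (Rel 0 0)))"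
      by (auto simp: sat_All)
  qed
  have 2: "holds B (\<lambda>u v. \<exists>i\<in>S. v = f i u) (All 0 (All 1 (Imp (Rel 0 1) (Rel 1 0))))"
    unfolding holds_def
  proof (intro allI impI)
    fix e :: "nat \<Rightarrow> 'a"
    have "\<exists>i\<in>S. d1 = f i d2" if "d1 \<in> B" "d2 \<in> B" "i \<in> S" "d2 = f i d1" for d1 d2 i
      using involD(2)[OF inv that(3,1)] that by (intro bexI[of _ i]) auto
    then show "sat B (\<lambda>u v. \<exists>i\<in>S. v = f i u) e (All 0 (All 1 (Imp (Rel 0 1) (Rel 1 0))))"
      by (auto simp: sat_All sat_Imp)
  qed
  show ?thesis using 1 2 unfolding Gr_def by auto
qed

lemma tau_holds:
  assumes inv: "invol f S B" and G: "\<And>x w. x \<in> B \<Longrightarrow> reduced w \<Longrightarrow> set w \<subseteq> S \<Longrightarrow> w \<noteq> [] \<Longrightarrow> wact f w x \<noteq> x"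
    and n3: "3 \<le> n"
  shows "holds B (\<lambda>u v. \<exists>i\<in>S. v = f i u) (tau n)"
  unfolding holds_def tau_def
proof (intro allI impI)
  fix e :: "nat \<Rightarrow> 'a"
  show "sat B (\<lambda>u v. \<exists>i\<in>S. v = f i u) e (alls [0..<n] (Neg (Conj (distinct_vars [0..<n])
        (Conj (big_conj [Rel i (Suc i). i \<leftarrow> [0..<n - 1]]) (Rel (n - 1) 0)))))"
    unfolding sat_alls
  proof (intro allI impI)
    fix e' assume vals: "\<forall>v\<in>set [0..<n]. e' v \<in> B"
    have eB: "e' v \<in> B" if "v < n" for v using vals that by simp
    show "sat B (\<lambda>u v. \<exists>i\<in>S. v = f i u) e' (Neg (Conj (distinct_vars [0..<n])
        (Conj (big_conj [Rel i (Suc i). i \<leftarrow> [0..<n - 1]]) (Rel (n - 1) 0))))"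
    proof (simp only: sat.simps, rule notI)
      assume H: "sat B (\<lambda>u v. \<exists>i\<in>S. v = f i u) e' (distinct_vars [0..<n]) \<and>
        sat B (\<lambda>u v. \<exists>i\<in>S. v = f i u) e' (big_conj [Rel i (Suc i). i \<leftarrow> [0..<n - 1]]) \<and>
        (\<exists>i\<in>S. e' 0 = f i (e' (n - 1)))"
      have dist: "e' i \<noteq> e' j" if "i < j" "j < n" for i j
        using H that unfolding sat_distinct_vars by auto
      have edges: "\<forall>t. \<exists>k. t < n - 1 \<longrightarrow> k \<in> S \<and> e' (Suc t) = f k (e' t)"
        using H unfolding sat_big_conj by auto
      obtain I where I: "\<And>t. t < n - 1 \<Longrightarrow> I t \<in> S \<and> e' (Suc t) = f (I t) (e' t)"
        using choice[OF edges] by blast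
      obtain c where c: "c \<in> S" "e' 0 = f c (e' (n - 1))" using H by blast
      define W where "W m = rev (map I [0..<m])" for m
      have WS: "W (Suc m) = I m # W m" for m unfolding W_def by simp
      have W1: "m \<le> n - 1 \<Longrightarrow> wact f (W m) (e' 0) = e' m" for m
      proof (induction m)
        case 0 then show ?case unfolding W_def by simp
      next
        case (Suc m)
        then show ?case using I[of m] WS by simp
      qed
      have W2: "m \<le> n - 1 \<Longrightarrow> reduced (W m) \<and> set (W m) \<subseteq> S" for m
      proof (induction m)
        case 0 then show ?case unfolding W_def by simp
      next
        case (Suc m)
        then have IH: "reduced (W m)" "set (W m) \<subseteq> S" by auto
        have ImS: "I m \<in> S" using I[of m] Suc.prems by simp
        have "reduced (I m # W m)"
        proof (cases m)
          case 0 then show ?thesis unfolding W_def by simp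
        next
          case (Suc m')
          have ne: "I m' \<noteq> I m"
          proof
            assume eqI: "I m' = I m"
            have m'B: "e' m' \<in> B" using Suc \<open>Suc m \<le> n - 1\<close> eB by simp
            have "e' m = f (I m') (e' m')" using I[of m'] Suc \<open>Suc m \<le> n - 1\<close> by simp
            then have "e' (Suc m) = f (I m') (f (I m') (e' m'))" using I[of m] \<open>Suc m \<le> n - 1\<close> eqI by simp
            also have "\<dots> = e' m'" using involD(2)[OF inv _ m'B] I[of m'] Suc \<open>Suc m \<le> n - 1\<close> by simp
            moreover have "Suc m < n" using \<open>Suc m \<le> n - 1\<close> n3 by linarith
            ultimately show False using dist[of m' "Suc m"] Suc by simp
          qed
          have "W m = I m' # W m'" using WS Suc by simp
          then show ?thesis using IH ne by (simp add: reduced_Cons)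
        qed
        then show ?case using IH ImS WS by simp
      qed
      define w where "w = c # W (n - 1)"
      have n1: "n - 1 = Suc (n - 2)" using n3 by simp
      have Wn: "W (n - 1) = I (n - 2) # W (n - 2)" using WS n1 by simp
      have cne: "c \<noteq> I (n - 2)"
      proof
        assume eqc: "c = I (n - 2)"
        have n2B: "e' (n - 2) \<in> B" using eB n3 by simp
        have "e' (n - 1) = f (I (n - 2)) (e' (n - 2))" using I[of "n - 2"] n1 n3 by simp
        then have "e' 0 = f c (f c (e' (n - 2)))" using c eqc by simp
        also have "\<dots> = e' (n - 2)" using involD(2)[OF inv c(1) n2B] by simp
        finally show False using dist[of 0 "n - 2"] n3 by simp
      qed
      have rw: "reduced w" "set w \<subseteq> S" using W2[of "n - 1"] Wn cne c(1) unfolding w_def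
        by (auto simp: reduced_Cons)
      have "wact f w (e' 0) = f c (e' (n - 1))" using W1[of "n - 1"] unfolding w_def by simp
      also have "\<dots> = e' 0" using c by simp
      finally show False using G[OF eB[of 0] rw] n3 unfolding w_def by simp
    qed
  qed
qed

lemma deg_holds:
  assumes inv: "invol f {0..<r} B" and G: "\<And>x w. x \<in> B \<Longrightarrow> reduced w \<Longrightarrow> set w \<subseteq> {0..<r} \<Longrightarrow> w \<noteq> [] \<Longrightarrow> wact f w x \<noteq> x"
  shows "holds B (\<lambda>u v. \<exists>i\<in>{0..<r}. v = f i u) (deg_exactly r)"
  unfolding holds_def deg_exactly_def
proof (intro allI impI)
  fix e :: "nat \<Rightarrow> 'a"
  let ?R = "\<lambda>u v. \<exists>i\<in>{0..<r}. v = f i u"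
  show "sat B ?R e (All 0 (exs [1..<Suc r]
     (Conj (distinct_vars [1..<Suc r])
       (Conj (big_conj [Rel 0 i. i \<leftarrow> [1..<Suc r]])
         (All (Suc r) (Imp (Rel 0 (Suc r)) (big_disj [Eq (Suc r) i. i \<leftarrow> [1..<Suc r]])))))))"
    unfolding sat_All
  proof
    fix d assume d: "d \<in> B"
    define e' where "e' v = (if 1 \<le> v \<and> v \<le> r then f (v - 1) d else (e(0 := d)) v)" for v
    have e'0: "e' 0 = d" unfolding e'_def by simp
    have e'i: "e' (Suc i) = f i d" if "i < r" for i using that unfolding e'_def by simp
    have fB: "f i d \<in> B" if "i < r" for i using involD(1)[OF inv _ d] that by simp
    have agree: "\<forall>v. v \<notin> set [1..<Suc r] \<longrightarrow> e' v = (e(0 := d)) v" unfolding e'_def by auto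
    have vals: "\<forall>v\<in>set [1..<Suc r]. e' v \<in> B" using fB unfolding e'_def by auto
    have s1: "sat B ?R e' (distinct_vars [1..<Suc r])"
      unfolding sat_distinct_vars
    proof (intro allI impI)
      fix i j assume ij: "i < j" "j < length [1..<Suc r]"
      have jr: "j < r" using ij(2) by (simp del: upt_Suc)
      have nn: "[1..<Suc r] ! i = Suc i" "[1..<Suc r] ! j = Suc j" using ij jr by (simp_all del: upt_Suc)
      have "f i d \<noteq> f j d" using nbr_distinct[OF inv G, of i j d] ij jr d by simp
      then show "e' ([1..<Suc r] ! i) \<noteq> e' ([1..<Suc r] ! j)"
        unfolding nn using e'i[of i] e'i[of j] ij jr by simp
    qed
    have s2: "sat B ?R e' (big_conj [Rel 0 i. i \<leftarrow> [1..<Suc r]])"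
      unfolding sat_big_conj
    proof
      fix a assume "a \<in> set [Rel 0 i. i \<leftarrow> [1..<Suc r]]"
      then obtain i where i: "1 \<le> i" "i \<le> r" "a = Rel 0 i" by auto
      then have "e' i = f (i - 1) (e' 0)" using e'0 unfolding e'_def by simp
      then show "sat B ?R e' a" using i by auto
    qed
    have s3: "sat B ?R e' (All (Suc r) (Imp (Rel 0 (Suc r)) (big_disj [Eq (Suc r) i. i \<leftarrow> [1..<Suc r]])))"
      unfolding sat_All sat_Imp
    proof (intro ballI impI)
      fix z assume z: "z \<in> B" and rel: "sat B ?R (e'(Suc r := z)) (Rel 0 (Suc r))"
      then obtain k where k: "k < r" "z = f k d" using e'0 by auto
      have "sat B ?R (e'(Suc r := z)) (Eq (Suc r) (Suc k))" using k e'i by simp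
      moreover have "Eq (Suc r) (Suc k) \<in> set [Eq (Suc r) i. i \<leftarrow> [1..<Suc r]]" using k by auto
      ultimately show "sat B ?R (e'(Suc r := z)) (big_disj [Eq (Suc r) i. i \<leftarrow> [1..<Suc r]])"
        unfolding sat_big_disj by blast
    qed
    show "sat B ?R (e(0 := d)) (exs [1..<Suc r]
     (Conj (distinct_vars [1..<Suc r])
       (Conj (big_conj [Rel 0 i. i \<leftarrow> [1..<Suc r]])
         (All (Suc r) (Imp (Rel 0 (Suc r)) (big_disj [Eq (Suc r) i. i \<leftarrow> [1..<Suc r]]))))))"
      unfolding sat_exs using agree vals s1 s2 s3 by (intro exI[of _ e']) simp
  qed
qed

lemma sigma_holds:
  assumes inv: "invol f UNIV B" and G: "\<And>x w. x \<in> B \<Longrightarrow> reduced w \<Longrightarrow> set w \<subseteq> UNIV \<Longrightarrow> w \<noteq> [] \<Longrightarrow> wact f w x \<noteq> x"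
  shows "holds B (\<lambda>u v. \<exists>i\<in>UNIV. v = f i u) (sigma m)"
  unfolding holds_def sigma_def
proof (intro allI impI)
  fix e :: "nat \<Rightarrow> 'a"
  let ?R = "\<lambda>u v. \<exists>i\<in>UNIV. v = f i u"
  show "sat B ?R e (All 0 (exs [1..<Suc m]
     (Conj (distinct_vars [1..<Suc m]) (big_conj [Rel 0 i. i \<leftarrow> [1..<Suc m]]))))"
    unfolding sat_All
  proof
    fix d assume d: "d \<in> B"
    define e' where "e' v = (if 1 \<le> v \<and> v \<le> m then f (v - 1) d else (e(0 := d)) v)" for v
    have e'0: "e' 0 = d" unfolding e'_def by simp
    have e'i: "e' (Suc i) = f i d" if "i < m" for i using that unfolding e'_def by simp
    have fB: "f i d \<in> B" for i using involD(1)[OF inv _ d] by simp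
    have agree: "\<forall>v. v \<notin> set [1..<Suc m] \<longrightarrow> e' v = (e(0 := d)) v" unfolding e'_def by auto
    have vals: "\<forall>v\<in>set [1..<Suc m]. e' v \<in> B" using fB unfolding e'_def by auto
    have s1: "sat B ?R e' (distinct_vars [1..<Suc m])"
      unfolding sat_distinct_vars
    proof (intro allI impI)
      fix i j assume ij: "i < j" "j < length [1..<Suc m]"
      have jr: "j < m" using ij(2) by (simp del: upt_Suc)
      have nn: "[1..<Suc m] ! i = Suc i" "[1..<Suc m] ! j = Suc j" using ij jr by (simp_all del: upt_Suc)
      have "f i d \<noteq> f j d" using nbr_distinct[OF inv G, of i j d] ij jr d by simp
      then show "e' ([1..<Suc m] ! i) \<noteq> e' ([1..<Suc m] ! j)"
        unfolding nn using e'i[of i] e'i[of j] ij jr by simp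
    qed
    have s2: "sat B ?R e' (big_conj [Rel 0 i. i \<leftarrow> [1..<Suc m]])"
      unfolding sat_big_conj
    proof
      fix a assume "a \<in> set [Rel 0 i. i \<leftarrow> [1..<Suc m]]"
      then obtain i where i: "1 \<le> i" "i \<le> m" "a = Rel 0 i" by auto
      then have "e' i = f (i - 1) (e' 0)" using e'0 unfolding e'_def by simp
      then show "sat B ?R e' a" using i by auto
    qed
    show "sat B ?R (e(0 := d)) (exs [1..<Suc m]
     (Conj (distinct_vars [1..<Suc m]) (big_conj [Rel 0 i. i \<leftarrow> [1..<Suc m]])))"
      unfolding sat_exs using agree vals s1 s2 by (intro exI[of _ e']) simp
  qed
qed


lemma ext_same:
  assumes "finite S" "finite P" "P \<subseteq> S" "inj_on \<pi> P" "\<pi> ` P \<subseteq> S" "finite X" "X \<subseteq> S"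
  shows "\<exists>\<pi>'. inj_on \<pi>' (P \<union> X) \<and> \<pi>' ` (P \<union> X) \<subseteq> S \<and> (\<forall>i\<in>P. \<pi>' i = \<pi> i)"
proof -
  have "card (X - P) \<le> card (S - P)" using assms by (intro card_mono) auto
  also have "\<dots> = card S - card P" using card_Diff_subset[OF assms(2,3)] .
  finally have "card (X - P) + card P \<le> card S" using card_mono[OF assms(1,3)] by simp
  then show ?thesis using ext_inj[OF assms(2,4,5,6)] by blast
qed

lemma ext_same':
  "finite S \<Longrightarrow> finite P \<Longrightarrow> P \<subseteq> S \<Longrightarrow> inj_on \<pi> P \<Longrightarrow> \<pi> ` P \<subseteq> S \<Longrightarrow> finite X \<Longrightarrow> X \<subseteq> S \<Longrightarrow>
       card P + card X \<le> Cap \<Longrightarrow> \<exists>\<pi>'. inj_on \<pi>' (P \<union> X) \<and> \<pi>' ` (P \<union> X) \<subseteq> S \<and> (\<forall>i\<in>P. \<pi>' i = \<pi> i)"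
  by (rule ext_same)

lemma ef_inst:
  assumes finS: "finite S"
    and extAB: "\<And>P \<pi> X. finite P \<Longrightarrow> P \<subseteq> S \<Longrightarrow> inj_on \<pi> P \<Longrightarrow> \<pi> ` P \<subseteq> S' \<Longrightarrow> finite X \<Longrightarrow> X \<subseteq> S \<Longrightarrow>
       card P + card X \<le> Cap \<Longrightarrow> \<exists>\<pi>'. inj_on \<pi>' (P \<union> X) \<and> \<pi>' ` (P \<union> X) \<subseteq> S' \<and> (\<forall>i\<in>P. \<pi>' i = \<pi> i)"
    and extBA: "\<And>P \<pi> X. finite P \<Longrightarrow> P \<subseteq> S' \<Longrightarrow> inj_on \<pi> P \<Longrightarrow> \<pi> ` P \<subseteq> S \<Longrightarrow> finite X \<Longrightarrow> X \<subseteq> S' \<Longrightarrow>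
       card P + card X \<le> Cap \<Longrightarrow> \<exists>\<pi>'. inj_on \<pi>' (P \<union> X) \<and> \<pi>' ` (P \<union> X) \<subseteq> S \<and> (\<forall>i\<in>P. \<pi>' i = \<pi> i)"
  shows "ef (Astr S L (Suc N)) (fAstr S L) S (Bstr S' (Suc N)) fBstr S' L N Cap"
proof (rule ef.intro)
  show "\<And>i x. i \<in> S \<Longrightarrow> x \<in> Astr S L (Suc N) \<Longrightarrow> fAstr S L i x \<in> Astr S L (Suc N) \<and> fAstr S L i (fAstr S L i x) = x"
    using invol_A[of S L "Suc N"] unfolding invol_def by blast
  show "\<And>i x. i \<in> S' \<Longrightarrow> x \<in> Bstr S' (Suc N) \<Longrightarrow> fBstr i x \<in> Bstr S' (Suc N) \<and> fBstr i (fBstr i x) = x"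
    using invol_B[of S' "Suc N"] unfolding invol_def by blast
  show "\<And>x w. x \<in> Astr S L (Suc N) \<Longrightarrow> reduced w \<Longrightarrow> set w \<subseteq> S \<Longrightarrow> w \<noteq> [] \<Longrightarrow> length w \<le> L \<Longrightarrow>
      wact (fAstr S L) w x \<noteq> x" using girth_A by blast
  show "\<And>x w. x \<in> Bstr S' (Suc N) \<Longrightarrow> reduced w \<Longrightarrow> set w \<subseteq> S' \<Longrightarrow> w \<noteq> [] \<Longrightarrow> length w \<le> L \<Longrightarrow>
      wact fBstr w x \<noteq> x" using girth_B by blast
  show "\<And>Y. Y \<subseteq> Astr S L (Suc N) \<Longrightarrow> finite Y \<Longrightarrow> card Y \<le> N \<Longrightarrow>
       \<exists>a\<in>Astr S L (Suc N). \<forall>y\<in>Y. \<forall>w. set w \<subseteq> S \<longrightarrow> length w \<le> L \<longrightarrow> wact (fAstr S L) w y \<noteq> a"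
    using far_A by blast
  show "\<And>Y. Y \<subseteq> Bstr S' (Suc N) \<Longrightarrow> finite Y \<Longrightarrow> card Y \<le> N \<Longrightarrow>
       \<exists>a\<in>Bstr S' (Suc N). \<forall>y\<in>Y. \<forall>w. set w \<subseteq> S' \<longrightarrow> length w \<le> L \<longrightarrow> wact fBstr w y \<noteq> a"
    using far_B by blast
qed (fact extAB extBA)+


lemma Tr_pf: "pseudofinite (T_r r)"
  unfolding pseudofinite_def
proof (intro allI impI)
  fix \<phi> assume sen: "sentence \<phi>" and ent: "entails (T_r r) \<phi>"
  define n where "n = qd \<phi>"
  define N where "N = card (allvars \<phi>)"
  define L :: nat where "L = 2^n"
  define Cap :: nat where "Cap = n * 2^n"
  define S :: "nat set" where "S = {0..<r}"
  have finS: "finite S" unfolding S_def by simp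
  interpret E: ef "Astr S L (Suc N)" "fAstr S L" S "Bstr S (Suc N)" fBstr S L N Cap
    by (rule ef_inst[OF finS ext_same'[OF finS] ext_same'[OF finS]])
  have eqv: "sat (Astr S L (Suc N)) (\<lambda>u v. \<exists>i\<in>S. v = fAstr S L i u) e \<phi> \<longleftrightarrow>
     sat (Bstr S (Suc N)) (\<lambda>u v. \<exists>i\<in>S. v = fBstr i u) e' \<phi>" for e e'
    by (rule E.sentence_equiv[where n=n, OF sen]) (simp_all add: n_def N_def L_def Cap_def)
  have GB: "\<And>x w. x \<in> Bstr S (Suc N) \<Longrightarrow> reduced w \<Longrightarrow> set w \<subseteq> S \<Longrightarrow> w \<noteq> [] \<Longrightarrow> wact fBstr w x \<noteq> x"
    using girth_B by blast
  have GB': "\<And>x w. x \<in> Bstr {0..<r} (Suc N) \<Longrightarrow> reduced w \<Longrightarrow> set w \<subseteq> {0..<r} \<Longrightarrow> w \<noteq> [] \<Longrightarrow> wact fBstr w x \<noteq> x"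
    using girth_B by blast
  have BT: "\<forall>b\<in>T_r r. holds (Bstr S (Suc N)) (\<lambda>u v. \<exists>i\<in>S. v = fBstr i u) b"
  proof
    fix b assume "b \<in> T_r r"
    then consider "b \<in> Gr" | m where "b = tau m" "3 \<le> m" | "b = deg_exactly r"
      unfolding T_r_def by blast
    then show "holds (Bstr S (Suc N)) (\<lambda>u v. \<exists>i\<in>S. v = fBstr i u) b"
    proof cases
      case 1 then show ?thesis using Gr_holds[OF invol_B GB] by blast
    next
      case 2 then show ?thesis using tau_holds[OF invol_B GB] by blast
    next
      case 3 then show ?thesis using deg_holds[OF invol_B GB'] unfolding S_def by blast
    qed
  qed
  show "\<exists>(D::nat set) R. finite D \<and> D \<noteq> {} \<and> holds D R \<phi>"
    by (rule pf_transfer[OF ent sen Bstr_ne BT finite_Astr[OF finS] Astr_ne eqv]) simp_all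
qed

lemma Tinf_pf: "pseudofinite T_inf"
  unfolding pseudofinite_def
proof (intro allI impI)
  fix \<phi> assume sen: "sentence \<phi>" and ent: "entails T_inf \<phi>"
  define n where "n = qd \<phi>"
  define N where "N = card (allvars \<phi>)"
  define L :: nat where "L = 2^n"
  define Cap :: nat where "Cap = n * 2^n"
  define S :: "nat set" where "S = {0..<Cap}"
  have finS: "finite S" unfolding S_def by simp
  have extBA: "\<exists>\<pi>'. inj_on \<pi>' (P \<union> X) \<and> \<pi>' ` (P \<union> X) \<subseteq> S \<and> (\<forall>i\<in>P. \<pi>' i = \<pi> i)"
    if a: "finite P" "P \<subseteq> UNIV" "inj_on \<pi> P" "\<pi> ` P \<subseteq> S" "finite X" "X \<subseteq> UNIV" "card P + card X \<le> Cap" for P \<pi> X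
  proof -
    have "card (X - P) \<le> card X" using a(5) by (intro card_mono) auto
    then have "card (X - P) + card P \<le> card S" using a(7) unfolding S_def by simp
    then show ?thesis using ext_inj[OF a(1,3,4,5)] by blast
  qed
  have extAB: "\<exists>\<pi>'. inj_on \<pi>' (P \<union> X) \<and> \<pi>' ` (P \<union> X) \<subseteq> (UNIV :: nat set) \<and> (\<forall>i\<in>P. \<pi>' i = \<pi> i)"
    if a: "finite P" "P \<subseteq> S" "inj_on \<pi> P" "\<pi> ` P \<subseteq> UNIV" "finite X" "X \<subseteq> S" "card P + card X \<le> Cap" for P \<pi> X
    by (rule ext_inj[OF a(1,3) _ a(5)]) auto
  interpret E: ef "Astr S L (Suc N)" "fAstr S L" S "Bstr UNIV (Suc N)" fBstr UNIV L N Cap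
    by (rule ef_inst[OF finS extAB extBA])
  have eqv: "sat (Astr S L (Suc N)) (\<lambda>u v. \<exists>i\<in>S. v = fAstr S L i u) e \<phi> \<longleftrightarrow>
     sat (Bstr UNIV (Suc N)) (\<lambda>u v. \<exists>i\<in>UNIV. v = fBstr i u) e' \<phi>" for e e'
    by (rule E.sentence_equiv[where n=n, OF sen]) (simp_all add: n_def N_def L_def Cap_def)
  have GB: "\<And>x w. x \<in> Bstr UNIV (Suc N) \<Longrightarrow> reduced w \<Longrightarrow> set w \<subseteq> UNIV \<Longrightarrow> w \<noteq> [] \<Longrightarrow> wact fBstr w x \<noteq> x"
    using girth_B by blast
  have BT: "\<forall>b\<in>T_inf. holds (Bstr UNIV (Suc N)) (\<lambda>u v. \<exists>i\<in>UNIV. v = fBstr i u) b"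
  proof
    fix b assume "b \<in> T_inf"
    then consider "b \<in> Gr" | m where "b = tau m" "3 \<le> m" | m where "b = sigma m"
      unfolding T_inf_def by blast
    then show "holds (Bstr UNIV (Suc N)) (\<lambda>u v. \<exists>i\<in>UNIV. v = fBstr i u) b"
    proof cases
      case 1 then show ?thesis using Gr_holds[OF invol_B GB] by blast
    next
      case 2 then show ?thesis using tau_holds[OF invol_B GB] by blast
    next
      case 3 then show ?thesis using sigma_holds[OF invol_B GB] by blast
    qed
  qed
  show "\<exists>(D::nat set) R. finite D \<and> D \<noteq> {} \<and> holds D R \<phi>"
    by (rule pf_transfer[OF ent sen Bstr_ne BT finite_Astr[OF finS] Astr_ne eqv]) simp_all
qed

theorem theorem4p5:
  shows "(\<forall>r. pseudofinite (T_r r)) \<and> pseudofinite T_inf"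
  using Tr_pf Tinf_pf by blast


end
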